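(* Let $S(\mathbf x)$ be the $12\times 34$ symbolic matrix whose entry in row $i$ and column $j$ is a distinct variable if $j$ belongs to the list $R_i$ below and $0$ otherwise: $R_1=\{4,5,6,14,15,16,17,18,19,20,21\}$, $R_2=\{4,7,8,9,14,15,16,17,22,23,24,25\}$, $R_3=\{7,10,11,14,15,18,19,22,26,27\}$, $R_4=\{5,12,13,16,17,20,23,24,28,29,30\}$, $R_5=\{8,10,12,22,23,26,28,29,31,32,33\}$, $R_6=\{1,11,13,18,20,27,30,34\}$, $R_7=\{2,9,24,25,30,31,34\}$, $R_8=\{3,6,19,21,26,31,32,33,34\}$, $R_9=\{1,4,8,21,25,28,32,33\}$, $R_{10}=\{2,5,10,14,18,19,21,27,28,29,32\}$, $R_{11}=\{3,7,13,16,23,24,25,27,29\}$, $R_{12}=\{6,9,11,12,15,17,20,22,26,30,31,33,34\}$ (this is the symbolic slack matrix of the Perles polytope, an $8$-dimensional polytope with $12$ vertices and $34$ facets). Let $x_1,\dots,x_{120}$ be its variables. Then the slack ideal $$I=\langle 10\text{-minors of } S(\mathbf x)\rangle : (x_1x_2\cdots x_{120})^\infty\subseteq\mathbb{C}[x_1,\dots,x_{120}]$$ is not a prime ideal.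
   Context: The Perles polytope is the classical $8$-dimensional polytope with $12$ vertices and $34$ facets which is projectively unique and has no rational realization; it is defined by an affine Gale diagram consisting of the points $A,B,C,D,E,F,G,H$ (positive) and $F,G,H,I$ (negative) built from a regular pentagon and its pentagram, with $E,F,H,G$ four vertices of the pentagon, $I$ its center, and $A,B,C,D$ four tips of the pentagram. Its vertices are labelled $A,B,C,D,E,F,G,H,-F,-G,-H,-I$ (rows $1$ to $12$ above) and its $34$ facets (columns) correspond to the minimal positive circuits of the Gale diagram; the entry in row $i$, column $j$ of the slack matrix is nonzero exactly when the vertex $i$ does not lie on facet $j$, which is the pattern given in the claim. For a $d$-polytope, the slack ideal is the ideal of $(d+2)$-minors of the symbolic slack matrix saturated by the product of all variables; here $d=8$. *)

theory Defs
  imports Complex_Main "HOL-Library.Poly_Mapping" "Jordan_Normal_Form.Determinant"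
    "Jordan_Normal_Form.DL_Submatrix"
begin

text \<open>Multivariate polynomials over the complex numbers: variables are indexed by
  natural numbers; a monomial is a finitely supported exponent vector.\<close>
type_synonym mpoly = "(nat \<Rightarrow>\<^sub>0 nat) \<Rightarrow>\<^sub>0 complex"

definition Var :: "nat \<Rightarrow> mpoly" where
  "Var i = Poly_Mapping.single (Poly_Mapping.single i 1) 1"

text \<open>The polynomial ring in the variables with index in a set V
  (used with V = {..<120}, i.e. x_1,...,x_120 are Var 0,...,Var 119).\<close>
definition poly_ring :: "nat set \<Rightarrow> mpoly set" where
  "poly_ring V = {p. \<forall>m\<in>Poly_Mapping.keys p. Poly_Mapping.keys m \<subseteq> V}"

definition ideal_gen_in :: "mpoly set \<Rightarrow> mpoly set \<Rightarrow> mpoly set" where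
  "ideal_gen_in P G = {\<Sum>g\<in>F. c g * g | F c. finite F \<and> F \<subseteq> G \<and> (\<forall>g\<in>F. c g \<in> P)}"

definition saturation_in :: "mpoly set \<Rightarrow> mpoly set \<Rightarrow> mpoly \<Rightarrow> mpoly set" where
  "saturation_in P J h = {f \<in> P. \<exists>k::nat. h ^ k * f \<in> J}"

definition prime_ideal_in :: "mpoly set \<Rightarrow> mpoly set \<Rightarrow> bool" where
  "prime_ideal_in P I \<longleftrightarrow> I \<subseteq> P \<and> I \<noteq> P \<and>
     (\<forall>a\<in>P. \<forall>b\<in>P. a * b \<in> I \<longrightarrow> a \<in> I \<or> b \<in> I)"

text \<open>Support pattern of the slack matrix of the Perles polytope: row i (1-based, as in
  the paper, i = 1..12) lists the 1-based columns j (1..34) with a nonzero entry.\<close>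
definition perles_rows :: "nat list list" where
  "perles_rows =
   [[4,5,6,14,15,16,17,18,19,20,21],
    [4,7,8,9,14,15,16,17,22,23,24,25],
    [7,10,11,14,15,18,19,22,26,27],
    [5,12,13,16,17,20,23,24,28,29,30],
    [8,10,12,22,23,26,28,29,31,32,33],
    [1,11,13,18,20,27,30,34],
    [2,9,24,25,30,31,34],
    [3,6,19,21,26,31,32,33,34],
    [1,4,8,21,25,28,32,33],
    [2,5,10,14,18,19,21,27,28,29,32],
    [3,7,13,16,23,24,25,27,29],
    [6,9,11,12,15,17,20,22,26,30,31,33,34]]"

text \<open>Support predicate with 0-based row i < 12 and 0-based column j < 34.\<close>
definition perles_supp :: "nat \<Rightarrow> nat \<Rightarrow> bool" where
  "perles_supp i j \<longleftrightarrow> i < 12 \<and> j < 34 \<and> Suc j \<in> set (perles_rows ! i)"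

text \<open>Index of the variable at a support entry: entries are numbered 0,1,...,119
  in row-major order.\<close>
definition perles_var_index :: "nat \<Rightarrow> nat \<Rightarrow> nat" where
  "perles_var_index i j =
     (\<Sum>r<i. card {c. c < 34 \<and> perles_supp r c}) + card {c. c < j \<and> perles_supp i c}"

definition perles_slack :: "mpoly mat" where
  "perles_slack = mat 12 34 (\<lambda>(i,j). if perles_supp i j then Var (perles_var_index i j) else 0)"

definition minors :: "nat \<Rightarrow> 'a::comm_ring_1 mat \<Rightarrow> 'a set" where
  "minors k A = {det (submatrix A I J) | I J.
      I \<subseteq> {..<dim_row A} \<and> J \<subseteq> {..<dim_col A} \<and> card I = k \<and> card J = k}"

definition perles_slack_ideal :: "mpoly set" where
  "perles_slack_ideal =
     saturation_in (poly_ring {..<120})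
       (ideal_gen_in (poly_ring {..<120}) (minors 10 perles_slack))
       (\<Prod>i<120. Var i)"

end

theory Submission
  imports Defs "Jordan_Normal_Form.DL_Rank_Submatrix" "HOL-Library.Product_Lexorder"
begin

definition subl :: "'a mat \<Rightarrow> nat list \<Rightarrow> nat list \<Rightarrow> 'a mat" where
  "subl A xs ys = mat (length xs) (length ys) (\<lambda>(i,j). A $$ (xs!i, ys!j))"

definition dl :: "nat \<Rightarrow> 'b list \<Rightarrow> 'b list" where
  "dl i xs = take i xs @ drop (Suc i) xs"

lemma length_dl: "i < length xs \<Longrightarrow> length (dl i xs) = length xs - 1"
  unfolding dl_def by auto

lemma nth_dl: "i < length xs \<Longrightarrow> k < length xs - 1 \<Longrightarrow>
  dl i xs ! k = xs ! (if k < i then k else Suc k)"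
  unfolding dl_def by (auto simp: nth_append min_def)

lemma mat_delete_subl:
  assumes "i < length xs" "j < length ys"
  shows "mat_delete (subl A xs ys) i j = subl A (dl i xs) (dl j ys)"
  using assms
  by (intro eq_matI) (auto simp: mat_delete_def subl_def length_dl nth_dl)

fun dexp :: "'a::comm_ring_1 mat \<Rightarrow> nat list \<Rightarrow> nat list \<Rightarrow> 'a" where
  "dexp A xs [] = 1"
| "dexp A xs (y#ys) = (\<Sum>i\<leftarrow>[0..<length xs].
      if A $$ (xs!i, y) = 0 then 0 else (-1)^i * A $$ (xs!i, y) * dexp A (dl i xs) ys)"

lemma det_subl_dexp:
  "length xs = length ys \<Longrightarrow> det (subl A xs ys) = dexp A xs ys"
proof (induction ys arbitrary: xs)
  case Nil
  then show ?case by (simp add: subl_def det_def)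
next
  case (Cons y ys)
  let ?B = "subl A xs (y#ys)"
  have n: "length xs = Suc (length ys)" using Cons.prems by simp
  have B: "?B \<in> carrier_mat (length xs) (length xs)" using Cons.prems by (simp add: subl_def)
  have "det ?B = (\<Sum>i<length xs. ?B $$ (i,0) * cofactor ?B i 0)"
    by (rule laplace_expansion_column[OF B]) (simp add: n)
  also have "\<dots> = (\<Sum>i<length xs. (-1)^i * A $$ (xs!i, y) * dexp A (dl i xs) ys)"
  proof (rule sum.cong[OF refl])
    fix i assume i: "i \<in> {..<length xs}"
    have "cofactor ?B i 0 = (-1)^i * det (subl A (dl i xs) (dl 0 (y#ys)))"
      unfolding cofactor_def using i by (simp add: mat_delete_subl)
    also have "dl 0 (y#ys) = ys" by (simp add: dl_def)
    also have "det (subl A (dl i xs) ys) = dexp A (dl i xs) ys"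
      using i n by (intro Cons.IH) (simp add: length_dl)
    finally show "?B $$ (i,0) * cofactor ?B i 0 = (-1)^i * A $$ (xs!i, y) * dexp A (dl i xs) ys"
      using i by (simp add: subl_def)
  qed
  also have "\<dots> = (\<Sum>i\<leftarrow>[0..<length xs]. (-1)^i * A $$ (xs!i, y) * dexp A (dl i xs) ys)"
    by (simp add: sum_list_distinct_conv_sum_set atLeast0LessThan)
  also have "\<dots> = dexp A xs (y#ys)"
    by (simp add: if_distrib cong: if_cong) (intro arg_cong[where f=sum_list] map_cong; simp)
  finally show ?case .
qed


lemma pick_sorted:
  assumes "sorted_wrt (<) xs" "i < length xs"
  shows "pick (set xs) i = xs ! i"
  using assms(2)
proof (induction i)
  case 0
  show ?case unfolding pick.simps
  proof (rule Least_equality)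
    show "xs ! 0 \<in> set xs" using 0 by simp
    fix y assume "y \<in> set xs"
    then obtain k where k: "k < length xs" "y = xs ! k" by (auto simp: in_set_conv_nth)
    then show "xs ! 0 \<le> y" using assms(1)
      by (cases k) (auto simp: sorted_wrt_iff_nth_less less_imp_le)
  qed
next
  case (Suc n)
  then have IH: "pick (set xs) n = xs ! n" by simp
  show ?case unfolding pick.simps IH
  proof (rule Least_equality)
    show "xs ! Suc n \<in> set xs \<and> xs ! n < xs ! Suc n"
      using Suc.prems assms(1) by (auto simp: sorted_wrt_iff_nth_less)
    fix y assume "y \<in> set xs \<and> xs ! n < y"
    then obtain k where k: "k < length xs" "y = xs ! k" "xs ! n < xs ! k" by (auto simp: in_set_conv_nth)
    have "\<not> k \<le> n"
    proof
      assume "k \<le> n"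
      then have "xs ! k \<le> xs ! n" using assms(1) Suc.prems
        by (cases "k = n") (auto simp: sorted_wrt_iff_nth_less less_imp_le)
      then show False using k by simp
    qed
    then have "Suc n \<le> k" by simp
    then show "xs ! Suc n \<le> y" using assms(1) k
      by (cases "Suc n = k") (auto simp: sorted_wrt_iff_nth_less less_imp_le)
  qed
qed

lemma card_sorted_bound:
  fixes xs :: "nat list"
  assumes "sorted_wrt (<) xs" "\<forall>x\<in>set xs. x < n"
  shows "card {i. i < n \<and> i \<in> set xs} = length xs"
proof -
  have e: "{i. i < n \<and> i \<in> set xs} = set xs" using assms(2) by blast
  have d: "distinct xs" using assms(1) unfolding strict_sorted_iff by (rule conjunct2)
  show ?thesis unfolding e using d by (rule distinct_card)
qed

lemma submatrix_subl:
  assumes "sorted_wrt (<) xs" "\<forall>x\<in>set xs. x < dim_row A"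
          "sorted_wrt (<) ys" "\<forall>y\<in>set ys. y < dim_col A"
  shows "submatrix A (set xs) (set ys) = subl A xs ys"
proof -
  have r: "card {i. i < dim_row A \<and> i \<in> set xs} = length xs" using assms(1,2) by (rule card_sorted_bound)
  have c: "card {j. j < dim_col A \<and> j \<in> set ys} = length ys" using assms(3,4) by (rule card_sorted_bound)
  show ?thesis unfolding submatrix_def subl_def r c
  proof (rule cong_mat[OF refl refl])
    fix i j assume "i < length xs" "j < length ys"
    then show "(\<lambda>(i, j). A $$ (pick (set xs) i, pick (set ys) j)) (i, j) = (\<lambda>(i, j). A $$ (xs ! i, ys ! j)) (i, j)"
      using pick_sorted[OF assms(1)] pick_sorted[OF assms(3)] by simp
  qed
qed

abbreviation PR :: "mpoly set" where "PR \<equiv> poly_ring {..<120}"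

lemma PR_add: assumes "p \<in> PR" "q \<in> PR" shows "p + q \<in> PR"
  unfolding poly_ring_def mem_Collect_eq
proof
  fix m assume "m \<in> Poly_Mapping.keys (p + q)"
  then have "m \<in> Poly_Mapping.keys p \<or> m \<in> Poly_Mapping.keys q" using Poly_Mapping.keys_add[of p q] by blast
  then show "Poly_Mapping.keys m \<subseteq> {..<120}" using assms unfolding poly_ring_def mem_Collect_eq by metis
qed

lemma PR_uminus: "p \<in> PR \<Longrightarrow> - p \<in> PR"
  unfolding poly_ring_def by simp

lemma PR_diff: "p \<in> PR \<Longrightarrow> q \<in> PR \<Longrightarrow> p - q \<in> PR"
  using PR_add[of p "-q"] PR_uminus by simp

lemma PR_mult: "p \<in> PR \<Longrightarrow> q \<in> PR \<Longrightarrow> p * q \<in> PR"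
  unfolding poly_ring_def mem_Collect_eq
proof (intro ballI)
  fix m assume p: "\<forall>m\<in>Poly_Mapping.keys p. Poly_Mapping.keys m \<subseteq> {..<120}" and q: "\<forall>m\<in>Poly_Mapping.keys q. Poly_Mapping.keys m \<subseteq> {..<120}"
    and m: "m \<in> Poly_Mapping.keys (p * q)"
  then obtain a b where "m = a + b" "a \<in> Poly_Mapping.keys p" "b \<in> Poly_Mapping.keys q" using Poly_Mapping.keys_mult[of p q] by auto
  then have "Poly_Mapping.keys a \<subseteq> {..<120}" "Poly_Mapping.keys b \<subseteq> {..<120}" "m = a + b" using p q by blast+
  then show "Poly_Mapping.keys m \<subseteq> {..<120}" using Poly_Mapping.keys_add[of a b] by blast
qed

lemma PR_zero: "0 \<in> PR" unfolding poly_ring_def by simp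
lemma PR_one: "1 \<in> PR" unfolding poly_ring_def by simp

definition Cst :: "complex \<Rightarrow> mpoly" where "Cst c = Poly_Mapping.single 0 c"

lemma PR_Cst: "Cst c \<in> PR" unfolding poly_ring_def Cst_def by simp

lemma PR_of_int: "(of_int n :: mpoly) \<in> PR"
  using PR_Cst[of "of_int n"] by (simp add: Cst_def)

lemma PR_Var: "i < 120 \<Longrightarrow> Var i \<in> PR" unfolding poly_ring_def Var_def by simp

lemma PR_prod: "finite A \<Longrightarrow> (\<And>a. a \<in> A \<Longrightarrow> f a \<in> PR) \<Longrightarrow> prod f A \<in> PR"
  by (induction A rule: finite_induct) (auto intro: PR_mult PR_one)

lemma PR_power: "p \<in> PR \<Longrightarrow> p ^ k \<in> PR"
  by (induction k) (auto intro: PR_mult PR_one)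

lemma Cst_add: "Cst (a + b) = Cst a + Cst b" unfolding Cst_def by (simp add: single_add)
lemma Cst_mult: "Cst (a * b) = Cst a * Cst b" unfolding Cst_def by (simp add: mult_single)
lemma Cst_of_int: "Cst (of_int n) = of_int n" unfolding Cst_def by simp

abbreviation hh :: mpoly where "hh \<equiv> \<Prod>i<120. Var i"

lemma PR_hh: "hh \<in> PR" by (rule PR_prod) (auto intro: PR_Var)

abbreviation JJ :: "mpoly set" where "JJ \<equiv> ideal_gen_in PR (minors 10 perles_slack)"
abbreviation II :: "mpoly set" where "II \<equiv> perles_slack_ideal"

lemma II_def': "II = saturation_in PR JJ hh" unfolding perles_slack_ideal_def by simp

lemma JJ_zero: "0 \<in> JJ"
  unfolding ideal_gen_in_def by (rule CollectI, rule exI[of _ "{}"]) auto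

lemma JJ_gen: "g \<in> minors 10 perles_slack \<Longrightarrow> g \<in> JJ"
  unfolding ideal_gen_in_def
  by (rule CollectI, rule exI[of _ "{g}"], rule exI[of _ "\<lambda>_. 1"]) (auto intro: PR_one)

lemma JJ_add: assumes "a \<in> JJ" "b \<in> JJ" shows "a + b \<in> JJ"
proof -
  obtain F1 c1 where 1: "a = (\<Sum>g\<in>F1. c1 g * g)" "finite F1" "F1 \<subseteq> minors 10 perles_slack" "\<forall>g\<in>F1. c1 g \<in> PR"
    using assms(1) unfolding ideal_gen_in_def by blast
  obtain F2 c2 where 2: "b = (\<Sum>g\<in>F2. c2 g * g)" "finite F2" "F2 \<subseteq> minors 10 perles_slack" "\<forall>g\<in>F2. c2 g \<in> PR"
    using assms(2) unfolding ideal_gen_in_def by blast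
  define c where "c g = (if g \<in> F1 then c1 g else 0) + (if g \<in> F2 then c2 g else 0)" for g
  have pt: "c g * g = (if g \<in> F1 then c1 g * g else 0) + (if g \<in> F2 then c2 g * g else 0)" for g
    unfolding c_def by (simp add: distrib_right)
  have fin: "finite (F1 \<union> F2)" using 1 2 by simp
  have "(\<Sum>g\<in>F1 \<union> F2. c g * g) = (\<Sum>g\<in>F1 \<union> F2. (if g \<in> F1 then c1 g * g else 0)) + (\<Sum>g\<in>F1 \<union> F2. (if g \<in> F2 then c2 g * g else 0))"
    unfolding pt by (rule sum.distrib)
  also have "(\<Sum>g\<in>F1 \<union> F2. (if g \<in> F1 then c1 g * g else 0)) = (\<Sum>g\<in>(F1 \<union> F2) \<inter> F1. c1 g * g)"
    by (rule sum.inter_restrict[OF fin, symmetric])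
  also have "(F1 \<union> F2) \<inter> F1 = F1" by blast
  also have "(\<Sum>g\<in>F1 \<union> F2. (if g \<in> F2 then c2 g * g else 0)) = (\<Sum>g\<in>(F1 \<union> F2) \<inter> F2. c2 g * g)"
    by (rule sum.inter_restrict[OF fin, symmetric])
  also have "(F1 \<union> F2) \<inter> F2 = F2" by blast
  finally have eq: "a + b = (\<Sum>g\<in>F1 \<union> F2. c g * g)" using 1 2 by simp
  have cP: "\<forall>g\<in>F1 \<union> F2. c g \<in> PR" using 1 2 unfolding c_def by (auto intro!: PR_add PR_zero)
  show ?thesis unfolding ideal_gen_in_def
    apply (rule CollectI)
    apply (rule exI[of _ "F1 \<union> F2"], rule exI[of _ c])
    using eq cP fin 1 2 by auto
qed

lemma JJ_mult: assumes "r \<in> PR" "a \<in> JJ" shows "r * a \<in> JJ"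
proof -
  obtain F c where 1: "a = (\<Sum>g\<in>F. c g * g)" "finite F" "F \<subseteq> minors 10 perles_slack" "\<forall>g\<in>F. c g \<in> PR"
    using assms(2) unfolding ideal_gen_in_def by blast
  have "r * a = (\<Sum>g\<in>F. (r * c g) * g)" using 1 by (simp add: sum_distrib_left mult.assoc)
  moreover have "\<forall>g\<in>F. r * c g \<in> PR" using 1 assms(1) by (auto intro: PR_mult)
  ultimately show ?thesis unfolding ideal_gen_in_def
    apply (intro CollectI)
    apply (rule exI[of _ F], rule exI[of _ "\<lambda>g. r * c g"])
    using 1 by auto
qed

lemma II_PR: "a \<in> II \<Longrightarrow> a \<in> PR" unfolding II_def' saturation_in_def by simp

lemma II_JJ: "a \<in> JJ \<Longrightarrow> a \<in> PR \<Longrightarrow> a \<in> II"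
  unfolding II_def' saturation_in_def by (auto intro!: exI[of _ 0])

lemma II_add: assumes "a \<in> II" "b \<in> II" shows "a + b \<in> II"
proof -
  obtain k1 where k1: "hh ^ k1 * a \<in> JJ" "a \<in> PR" using assms(1) unfolding II_def' saturation_in_def by blast
  obtain k2 where k2: "hh ^ k2 * b \<in> JJ" "b \<in> PR" using assms(2) unfolding II_def' saturation_in_def by blast
  have "hh ^ (k1 + k2) * (a + b) = hh ^ k2 * (hh ^ k1 * a) + hh ^ k1 * (hh ^ k2 * b)"
    by (simp add: power_add algebra_simps)
  also have "\<dots> \<in> JJ"
    by (rule JJ_add[OF JJ_mult[OF PR_power[OF PR_hh] k1(1)] JJ_mult[OF PR_power[OF PR_hh] k2(1)]])
  finally show ?thesis unfolding II_def' saturation_in_def using k1 k2 PR_add by blast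
qed

lemma II_mult: assumes "r \<in> PR" "a \<in> II" shows "r * a \<in> II"
proof -
  obtain k where k: "hh ^ k * a \<in> JJ" "a \<in> PR" using assms(2) unfolding II_def' saturation_in_def by blast
  have "hh ^ k * (r * a) = r * (hh ^ k * a)" by (simp add: algebra_simps)
  also have "\<dots> \<in> JJ" by (rule JJ_mult[OF assms(1) k(1)])
  finally show ?thesis unfolding II_def' saturation_in_def using k assms(1) PR_mult by blast
qed

lemma II_diff: assumes "a \<in> II" "b \<in> II" shows "a - b \<in> II"
  using II_add[OF assms(1) II_mult[OF PR_of_int[of "-1"] assms(2)]] by simp

lemma II_cancel_Var: assumes "i < 120" "p \<in> PR" "Var i * p \<in> II" shows "p \<in> II"
proof -
  obtain k where k: "hh ^ k * (Var i * p) \<in> JJ" using assms(3) unfolding II_def' saturation_in_def by blast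
  define h' where "h' = (\<Prod>j\<in>{..<120} - {i}. Var j)"
  have hh: "hh = Var i * h'" unfolding h'_def using assms(1)
    by (simp add: prod.remove[of "{..<120}" i])
  have h'P: "h' \<in> PR" unfolding h'_def by (rule PR_prod) (auto intro: PR_Var)
  have "hh ^ Suc k * p = h' * (hh ^ k * (Var i * p))" by (simp add: hh algebra_simps)
  also have "\<dots> \<in> JJ" by (rule JJ_mult[OF h'P k])
  finally show ?thesis unfolding II_def' saturation_in_def using assms(2) by blast
qed


subsection \<open>Evaluation homomorphism\<close>

definition mono :: "(nat \<Rightarrow> complex) \<Rightarrow> (nat \<Rightarrow>\<^sub>0 nat) \<Rightarrow> complex" where
  "mono z m = (\<Prod>v\<in>Poly_Mapping.keys m. z v ^ Poly_Mapping.lookup m v)"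

lemma mono_sup:
  assumes "finite T" "Poly_Mapping.keys m \<subseteq> T"
  shows "mono z m = (\<Prod>v\<in>T. z v ^ Poly_Mapping.lookup m v)"
  unfolding mono_def
  by (rule prod.mono_neutral_right[OF assms, symmetric]) (auto simp: in_keys_iff)

lemma mono_add: "mono z (a + b) = mono z a * mono z b"
proof -
  let ?T = "Poly_Mapping.keys a \<union> Poly_Mapping.keys b"
  have f: "finite ?T" by simp
  have "mono z (a + b) = (\<Prod>v\<in>?T. z v ^ Poly_Mapping.lookup (a + b) v)"
    by (rule mono_sup[OF f]) (rule Poly_Mapping.keys_add)
  also have "\<dots> = (\<Prod>v\<in>?T. z v ^ Poly_Mapping.lookup a v * z v ^ Poly_Mapping.lookup b v)"
    by (simp add: lookup_add power_add)
  also have "\<dots> = (\<Prod>v\<in>?T. z v ^ Poly_Mapping.lookup a v) * (\<Prod>v\<in>?T. z v ^ Poly_Mapping.lookup b v)"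
    by (rule prod.distrib)
  also have "\<dots> = mono z a * mono z b"
    using mono_sup[OF f, of a z] mono_sup[OF f, of b z] by simp
  finally show ?thesis .
qed

lemma mono_zero: "mono z 0 = 1" unfolding mono_def by simp

lemma mono_single: "mono z (Poly_Mapping.single i 1) = z i" unfolding mono_def by simp

definition ev :: "(nat \<Rightarrow> complex) \<Rightarrow> mpoly \<Rightarrow> complex" where
  "ev z p = (\<Sum>m\<in>Poly_Mapping.keys p. Poly_Mapping.lookup p m * mono z m)"

lemma ev_sup:
  assumes "finite S" "Poly_Mapping.keys p \<subseteq> S"
  shows "ev z p = (\<Sum>m\<in>S. Poly_Mapping.lookup p m * mono z m)"
  unfolding ev_def
  by (rule sum.mono_neutral_right[OF assms, symmetric]) (auto simp: in_keys_iff)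

lemma ev_add: "ev z (p + q) = ev z p + ev z q"
proof -
  let ?S = "Poly_Mapping.keys p \<union> Poly_Mapping.keys q"
  have f: "finite ?S" by simp
  have "ev z (p + q) = (\<Sum>m\<in>?S. Poly_Mapping.lookup (p + q) m * mono z m)"
    by (rule ev_sup[OF f]) (rule Poly_Mapping.keys_add)
  also have "\<dots> = (\<Sum>m\<in>?S. Poly_Mapping.lookup p m * mono z m) + (\<Sum>m\<in>?S. Poly_Mapping.lookup q m * mono z m)"
    by (simp add: lookup_add distrib_right sum.distrib)
  also have "\<dots> = ev z p + ev z q"
    using ev_sup[OF f, of p z] ev_sup[OF f, of q z] by simp
  finally show ?thesis .
qed

lemma ev_zero: "ev z 0 = 0" unfolding ev_def by simp

lemma ev_single: "ev z (Poly_Mapping.single m c) = c * mono z m"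
proof -
  have "ev z (Poly_Mapping.single m c) = (\<Sum>m'\<in>{m}. Poly_Mapping.lookup (Poly_Mapping.single m c) m' * mono z m')"
    by (rule ev_sup) auto
  then show ?thesis by simp
qed

lemma ev_sum: "ev z (sum f A) = (\<Sum>a\<in>A. ev z (f a))"
proof (cases "finite A")
  case True
  then show ?thesis by (induction A rule: finite_induct) (auto simp: ev_zero ev_add)
next
  case False
  then show ?thesis by (simp add: ev_zero)
qed

lemma pm_expand: "p = (\<Sum>m\<in>Poly_Mapping.keys p. Poly_Mapping.single m (Poly_Mapping.lookup p m))"
proof (rule poly_mapping_eqI)
  fix k
  have "Poly_Mapping.lookup (\<Sum>m\<in>Poly_Mapping.keys p. Poly_Mapping.single m (Poly_Mapping.lookup p m)) k
      = (\<Sum>m\<in>Poly_Mapping.keys p. (if m = k then Poly_Mapping.lookup p m else 0))"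
    by (simp add: lookup_sum lookup_single when_def)
  also have "\<dots> = Poly_Mapping.lookup p k" by (simp add: sum.delta' in_keys_iff)
  finally show "Poly_Mapping.lookup p k = Poly_Mapping.lookup (\<Sum>m\<in>Poly_Mapping.keys p. Poly_Mapping.single m (Poly_Mapping.lookup p m)) k" by simp
qed

lemma ev_mult: "ev z (p * q) = ev z p * ev z q"
proof -
  let ?P = "Poly_Mapping.keys p" and ?Q = "Poly_Mapping.keys q"
  have "p * q = (\<Sum>a\<in>?P. Poly_Mapping.single a (Poly_Mapping.lookup p a)) * (\<Sum>b\<in>?Q. Poly_Mapping.single b (Poly_Mapping.lookup q b))"
    using pm_expand[of p] pm_expand[of q] by simp
  also have "\<dots> = (\<Sum>a\<in>?P. \<Sum>b\<in>?Q. Poly_Mapping.single (a + b) (Poly_Mapping.lookup p a * Poly_Mapping.lookup q b))"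
    by (simp add: sum_product mult_single)
  finally have e: "p * q = \<dots>" .
  have "ev z (p * q) = (\<Sum>a\<in>?P. \<Sum>b\<in>?Q. (Poly_Mapping.lookup p a * mono z a) * (Poly_Mapping.lookup q b * mono z b))"
    unfolding e ev_sum ev_single mono_add by (simp add: algebra_simps)
  also have "\<dots> = ev z p * ev z q"
    unfolding ev_def by (simp add: sum_product)
  finally show ?thesis .
qed

lemma ev_one: "ev z 1 = 1"
  using ev_single[of z 0 1] by (simp add: mono_zero)

lemma ev_Var: "ev z (Var i) = z i"
  unfolding Var_def ev_single mono_single by simp

lemma ev_Cst: "ev z (Cst c) = c"
  unfolding Cst_def ev_single mono_zero by simp

lemma ev_hom: "comm_ring_hom (ev z)"
  by unfold_locales (auto simp: ev_add ev_mult ev_one ev_zero)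

subsection \<open>Rank argument\<close>

lemma rank_sum_outer:
  fixes k b :: "nat \<Rightarrow> nat \<Rightarrow> complex"
  shows "vec_space.rank nr (mat nr nc (\<lambda>(i,j). \<Sum>l<m. k i l * b l j)) \<le> m"
proof (induction m)
  case 0
  have e0: "mat nr nc (\<lambda>(i,j). \<Sum>l<0. k i l * b l j) = 0\<^sub>m nr nc" by (rule eq_matI) auto
  show ?case unfolding e0 using vec_space.rank_0I[of nr nc] by simp
next
  case (Suc m)
  have e: "mat nr nc (\<lambda>(i,j). \<Sum>l<Suc m. k i l * b l j)
      = mat nr nc (\<lambda>(i,j). \<Sum>l<m. k i l * b l j) + mat nr nc (\<lambda>(i,j). k i m * b m j)"
    by (rule eq_matI) auto
  have r1: "vec_space.rank nr (mat nr nc (\<lambda>(i,j). k i m * b m j)) \<le> 1"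
    by (rule vec_space.rank_le_1_product_entries[where f="\<lambda>r. k r m" and g="\<lambda>c. b m c"]) auto
  have "vec_space.rank nr (mat nr nc (\<lambda>(i,j). \<Sum>l<Suc m. k i l * b l j))
      \<le> vec_space.rank nr (mat nr nc (\<lambda>(i,j). \<Sum>l<m. k i l * b l j)) + vec_space.rank nr (mat nr nc (\<lambda>(i,j). k i m * b m j))"
    unfolding e by (rule vec_space.rank_subadditive) auto
  then show ?case using Suc.IH r1 by simp
qed

lemma minor_zero_low_rank:
  fixes A :: "complex mat"
  assumes A: "A \<in> carrier_mat nr nc" and r: "vec_space.rank nr A < card J" and J: "J \<subseteq> {..<nc}"
  shows "det (submatrix A I J) = 0"
proof (rule ccontr)
  assume "det (submatrix A I J) \<noteq> 0"
  then have "card {j. j < nc \<and> j \<in> J} \<le> vec_space.rank nr A"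
    by (rule vec_space.rank_gt_minor[OF A])
  moreover have "{j. j < nc \<and> j \<in> J} = J" using J by auto
  ultimately show False using r by simp
qed


definition X :: "nat \<Rightarrow> nat \<Rightarrow> mpoly" where "X i j = Var (perles_var_index i j)"

lemma Var_nz[simp]: "Var k \<noteq> 0"
  unfolding Var_def by (metis lookup_single_eq one_neq_zero lookup_zero)

lemma X_nz[simp]: "X i j \<noteq> 0" unfolding X_def by simp

lemma slack_entry: "i < 12 \<Longrightarrow> j < 34 \<Longrightarrow> perles_slack $$ (i,j) = (if perles_supp i j then X i j else 0)"
  unfolding perles_slack_def X_def by simp

lemma supp_bounds: "perles_supp i j \<Longrightarrow> i < 12 \<and> j < 34"
  unfolding perles_supp_def by simp

lemma dim_slack[simp]: "dim_row perles_slack = 12" "dim_col perles_slack = 34"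
  unfolding perles_slack_def by simp_all

lemma card_filter_upt: "card {c. c < n \<and> P c} = length (filter P [0..<n])"
proof -
  have "{c. c < n \<and> P c} = set (filter P [0..<n])" by auto
  then show ?thesis using distinct_card[of "filter P [0..<n]"] by simp
qed

lemma sum_list_upt_lessThan: "sum_list (map f [0..<n]) = (\<Sum>r<n. f r)"
  by (induction n) auto


subsection \<open>The golden ring Z[phi] as pairs\<close>

fun zadd :: "int \<times> int \<Rightarrow> int \<times> int \<Rightarrow> int \<times> int" where
  "zadd (a, b) (c, d) = (a + c, b + d)"
fun zmul :: "int \<times> int \<Rightarrow> int \<times> int \<Rightarrow> int \<times> int" where
  "zmul (a, b) (c, d) = (a * c + b * d, a * d + b * c + b * d)"
definition zsum :: "(int \<times> int) list \<Rightarrow> int \<times> int" where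
  "zsum xs = foldr zadd xs (0, 0)"
definition zprod :: "(int \<times> int) list \<Rightarrow> int \<times> int" where
  "zprod xs = foldr zmul xs (1, 0)"
fun znorm :: "int \<times> int \<Rightarrow> int" where
  "znorm (a, b) = a * a + a * b - b * b"
fun emb :: "complex \<Rightarrow> int \<times> int \<Rightarrow> complex" where
  "emb r (a, b) = of_int a + of_int b * r"

definition ph1 :: complex where "ph1 = (1 + complex_of_real (sqrt 5)) / 2"
definition ph2 :: complex where "ph2 = (1 - complex_of_real (sqrt 5)) / 2"

lemma sq5: "complex_of_real (sqrt 5) * complex_of_real (sqrt 5) = 5"
proof -
  have "sqrt 5 * sqrt 5 = (5::real)" by simp
  then have "complex_of_real (sqrt 5 * sqrt 5) = complex_of_real 5" by (rule arg_cong)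
  then show ?thesis by (simp only: of_real_mult of_real_numeral)
qed

lemma ph1_sq: "ph1 * ph1 = ph1 + 1"
proof -
  have "ph1 * ph1 = (1 + 2 * complex_of_real (sqrt 5) + complex_of_real (sqrt 5) * complex_of_real (sqrt 5)) / 4"
    unfolding ph1_def by (simp add: algebra_simps)
  also have "\<dots> = ph1 + 1" unfolding sq5 ph1_def by simp
  finally show ?thesis .
qed
lemma ph2_sq: "ph2 * ph2 = ph2 + 1"
proof -
  have "ph2 * ph2 = (1 - 2 * complex_of_real (sqrt 5) + complex_of_real (sqrt 5) * complex_of_real (sqrt 5)) / 4"
    unfolding ph2_def by (simp add: algebra_simps)
  also have "\<dots> = ph2 + 1" unfolding sq5 ph2_def by simp
  finally show ?thesis .
qed
lemma ph_sum: "ph1 + ph2 = 1" unfolding ph1_def ph2_def by (simp add: add_divide_distrib[symmetric])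
lemma ph_prod: "ph1 * ph2 = -1"
proof -
  have "ph1 * ph2 = (1 - complex_of_real (sqrt 5) * complex_of_real (sqrt 5)) / 4"
    unfolding ph1_def ph2_def by (simp add: algebra_simps)
  also have "\<dots> = -1" unfolding sq5 by simp
  finally show ?thesis .
qed
lemma ph_ne: "ph1 \<noteq> ph2"
proof
  assume "ph1 = ph2"
  then have "ph1 - ph2 = 0" by simp
  moreover have "ph1 - ph2 = complex_of_real (sqrt 5)" unfolding ph1_def ph2_def by (simp add: diff_divide_distrib[symmetric])
  ultimately show False by simp
qed

definition goodr :: "complex \<Rightarrow> bool" where "goodr r \<longleftrightarrow> r * r = r + 1"

lemma goodr_ph: "goodr ph1" "goodr ph2" unfolding goodr_def using ph1_sq ph2_sq by auto

lemma emb_add: "emb r (zadd x y) = emb r x + emb r y"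
  by (cases x; cases y) (simp add: algebra_simps)

lemma emb_mul: "goodr r \<Longrightarrow> emb r (zmul x y) = emb r x * emb r y"
proof (cases x; cases y)
  fix a b c d assume g: "goodr r" and xy: "x = (a, b)" "y = (c, d)"
  have "emb r x * emb r y = of_int (a*c) + of_int (a*d + b*c) * r + of_int (b*d) * (r * r)"
    unfolding xy by (simp add: algebra_simps)
  also have "\<dots> = emb r (zmul x y)" using g unfolding xy goodr_def by (simp add: algebra_simps)
  finally show ?thesis by simp
qed

lemma emb_zsum: "emb r (zsum xs) = sum_list (map (emb r) xs)"
  unfolding zsum_def by (induction xs) (auto simp: emb_add)

lemma emb_zprod: "goodr r \<Longrightarrow> emb r (zprod xs) = prod_list (map (emb r) xs)"
  unfolding zprod_def by (induction xs) (auto simp: emb_mul)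

lemma emb_norm: "emb ph1 x * emb ph2 x = of_int (znorm x)"
proof (cases x)
  fix a b assume x: "x = (a, b)"
  have "emb ph1 x * emb ph2 x = of_int (a*a) + of_int (a*b) * (ph1 + ph2) + of_int (b*b) * (ph1 * ph2)"
    unfolding x by (simp add: algebra_simps)
  also have "\<dots> = of_int (znorm x)" unfolding ph_sum ph_prod x by simp
  finally show ?thesis .
qed

lemma emb_nz: "znorm x \<noteq> 0 \<Longrightarrow> emb ph1 x \<noteq> 0 \<and> emb ph2 x \<noteq> 0"
  using emb_norm[of x] by (metis mult_eq_0_iff of_int_eq_0_iff)


definition Ktab :: "(int \<times> int) list list" where
  "Ktab = [[(1, 0), (0, 0), (0, 0), (0, 0), (0, 0), (0, 0), (0, 0), (0, 0), (0, 0)], [(0, 0), (1, 0), (0, 0), (0, 0), (0, 0), (0, 0), (0, 0), (0, 0), (0, 0)], [(0, 0), (0, 0), (1, 0), (0, 0), (0, 0), (0, 0), (0, 0), (0, 0), (0, 0)], [(0, 0), (0, 0), (0, 0), (1, 0), (0, 0), (0, 0), (0, 0), (0, 0), (0, 0)], [(0, 0), (0, 0), (0, 0), (0, 0), (1, 0), (0, 0), (0, 0), (0, 0), (0, 0)], [(-1, -1), (0, -1), (-1, 0), (-1, -1), (-1, 0), (-1, 0), (0, 0), (0, 0), (-1, -1)], [(-1, 0), (-1, 0), (1, -1), (0, 0), (-1, 0), (0, 0), (-1, 0), (0, 0), (-1, 0)], [(-1, 0), (-1, 0), (-1, 0), (-1, 0), (-1, 0), (0, 0), (0, 0), (-1,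 0), (0, -1)], [(0, 0), (0, 0), (0, 0), (0, 0), (0, 0), (1, 0), (0, 0), (0, 0), (0, 0)], [(0, 0), (0, 0), (0, 0), (0, 0), (0, 0), (0, 0), (1, 0), (0, 0), (0, 0)], [(0, 0), (0, 0), (0, 0), (0, 0), (0, 0), (0, 0), (0, 0), (1, 0), (0, 0)], [(0, 0), (0, 0), (0, 0), (0, 0), (0, 0), (0, 0), (0, 0), (0, 0), (1, 0)]]"

definition Btab :: "(int \<times> int) list list" where
  "Btab = [[(0, 0), (0, 0), (0, 0), (-1, 0), (1, 1), (-1, -1), (0, 0), (0, 0), (0, 0), (0, 0), (0, 0), (0, 0), (0, 0), (1, -1), (2, -1), (-1, -1), (1, -1), (1, 0), (-1, 0), (1, 0), (1, 0), (0, 0), (0, 0), (0, 0), (0, 0), (0, 0), (0, 0), (0, 0), (0, 0), (0, 0), (0, 0), (0, 0), (0, 0), (0, 0)], [(0, 0), (0, 0), (0, 0), (1, 0), (0, 0), (0, 0), (1, 0), (-1, 0), (-1, -1), (0, 0), (0, 0), (0, 0), (0, 0), (0, 1), (-2, 1), (1, 1), (0, 1), (0, 0), (0, 0), (0, 0), (0, 0), (-2, 1), (1, 1), (1, 1), (-1, 0), (0, 0), (0, 0), (0, 0), (0, 0), (0, 0), (0, 0), (0, 0), (0, 0), (0, 0)], [(0, 0), (0, 0), (0, 0), (0, 0), (0, 0), (0, 0), (0, -1), (0, 0), (0, 0), (1, 0), (1, 0), (0, 0), (0, 0), (-1, 0), (-1, 1), (0, 0), (0, 0), (-1, 0), (1,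 1), (0, 0), (0, 0), (-2, 1), (0, 0), (0, 0), (0, 0), (0, 1), (1, 0), (0, 0), (0, 0), (0, 0), (0, 0), (0, 0), (0, 0), (0, 0)], [(0, 0), (0, 0), (0, 0), (0, 0), (-1, -1), (0, 0), (0, 0), (0, 0), (0, 0), (0, 0), (0, 0), (0, -1), (1, 0), (0, 0), (0, 0), (1, 0), (-1, 1), (0, 0), (0, 0), (-1, 1), (0, 0), (0, 0), (1, -1), (0, -1), (0, 0), (0, 0), (0, 0), (1, 0), (1, 0), (0, 1), (0, 0), (0, 0), (0, 0), (0, 0)], [(0, 0), (0, 0), (0, 0), (0, 0), (0, 0), (0, 0), (0, 0), (1, 0), (0, 0), (-1, 0), (0, 0), (-1, -1), (0, 0), (0, 0), (0, 0), (0, 0), (0, 0), (0, 0), (0, 0), (0, 0), (0, 0), (2, -1), (-1, -1), (0, 0), (0, 0), (1, -1), (0, 0), (-1, 0), (-1, -1), (0, 0), (1, 1), (1, 0), (1, 0), (0, 0)], [(-1, 0), (0, 0), (0, 0), (1, 0), (0, 0), (0, 0), (0, 0), (-1, 1), (0, 0), (0, 0), (0, 0), (0, 0), (0, 0), (0, 0), (0, 0), (0, 0), (0, 0), (0, 0), (0, 0), (0, 0), (-1, -1), (0, 0), (0, 0), (0, 0), (0, 1), (0, 0), (0, 0), (0, -1), (0, 0), (0, 0), (0, 0), (-1, 0), (0, 1), (0, 0)], [(0, 0), (-1, 0), (0, 0), (0, 0), (-1, -1), (0, 0), (0, 0), (0, 0), (0, 0), (2, -1), (0, 0), (0, 0),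 (0, 0), (-2, 1), (0, 0), (0, 0), (0, 0), (-2, 1), (1, -1), (0, 0), (-1, 0), (0, 0), (0, 0), (0, 0), (0, 0), (0, 0), (1, -1), (1, 0), (1, 1), (0, 0), (0, 0), (-1, 0), (0, 0), (0, 0)], [(0, 0), (0, 0), (-1, 0), (0, 0), (0, 0), (0, 0), (-1, 1), (0, 0), (0, 0), (0, 0), (0, 0), (0, 0), (-1, 0), (0, 0), (0, 0), (-1, 0), (0, 0), (0, 0), (0, 0), (0, 0), (0, 0), (0, 0), (-1, 1), (-1, 0), (1, 0), (0, 0), (-1, 0), (0, 0), (0, 1), (0, 0), (0, 0), (0, 0), (0, 0), (0, 0)], [(0, 0), (0, 0), (0, 0), (0, 0), (0, 0), (1, 1), (0, 0), (0, 0), (0, 1), (0, 0), (1, -1), (1, 1), (0, 0), (0, 0), (-2, 1), (0, 0), (-1, 0), (0, 0), (0, 0), (-1, 0), (0, 0), (-3, 2), (0, 0), (0, 0), (0, 0), (-2, 1), (0, 0), (0, 0), (0, 0), (-1, 0), (-1, 0), (0, 0), (-1, 0), (-1, 0)]]"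

definition zval :: "nat \<Rightarrow> nat \<Rightarrow> int \<times> int" where
  "zval i j = zsum (map (\<lambda>l. zmul (Ktab ! i ! l) (Btab ! l ! j)) [0..<9])"

lemma check_all: "list_all (\<lambda>i. list_all (\<lambda>j. (perles_supp i j \<longrightarrow> znorm (zval i j) \<noteq> 0) \<and> (\<not> perles_supp i j \<longrightarrow> zval i j = (0,0))) [0..<34]) [0..<12]"
  by code_simp

lemma zval_facts:
  assumes "i < 12" "j < 34"
  shows "(perles_supp i j \<longrightarrow> znorm (zval i j) \<noteq> 0) \<and> (\<not> perles_supp i j \<longrightarrow> zval i j = (0,0))"
  using check_all assms unfolding list_all_iff by simp

lemma zval_nz: "perles_supp i j \<Longrightarrow> znorm (zval i j) \<noteq> 0"
  using zval_facts supp_bounds by blast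

lemma zval_zero: "i < 12 \<Longrightarrow> j < 34 \<Longrightarrow> \<not> perles_supp i j \<Longrightarrow> zval i j = (0,0)"
  using zval_facts by blast

definition NN :: "nat \<Rightarrow> nat" where "NN r = card {c. c < 34 \<and> perles_supp r c}"
definition off :: "nat \<Rightarrow> nat" where "off i = (\<Sum>r<i. NN r)"

lemma vi_eq: "perles_var_index i j = off i + card {c. c < j \<and> perles_supp i c}"
  unfolding perles_var_index_def off_def NN_def by simp

lemma card_less_NN:
  assumes "perles_supp i j" shows "card {c. c < j \<and> perles_supp i c} < NN i"
  unfolding NN_def
proof (rule psubset_card_mono)
  show "finite {c. c < 34 \<and> perles_supp i c}" by simp
  have "j < 34" using supp_bounds[OF assms] by simp
  then show "{c. c < j \<and> perles_supp i c} \<subset> {c. c < 34 \<and> perles_supp i c}"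
    using assms by auto
qed

lemma off_Suc: "off (Suc i) = off i + NN i" unfolding off_def by simp

lemma off_mono: "i \<le> i' \<Longrightarrow> off i \<le> off i'"
  unfolding off_def by (rule sum_mono2) auto

lemma vi_lt: "perles_supp i j \<Longrightarrow> perles_var_index i j < off (Suc i)"
  using card_less_NN[of i j] unfolding vi_eq off_Suc by simp

lemma vi_ge: "off i \<le> perles_var_index i j" unfolding vi_eq by simp

lemma off_12: "off 12 = 120"
  unfolding off_def NN_def card_filter_upt sum_list_upt_lessThan[symmetric]
  by (simp add: upt_conv_Cons perles_supp_def perles_rows_def)

lemma vi_bound: "perles_supp i j \<Longrightarrow> perles_var_index i j < 120"
proof -
  assume s: "perles_supp i j"
  then have "Suc i \<le> 12" using supp_bounds[OF s] by simp
  then have "off (Suc i) \<le> 120" using off_mono off_12 by metis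
  then show ?thesis using vi_lt[OF s] by simp
qed

lemma vi_inj:
  assumes s: "perles_supp i j" and s': "perles_supp i' j'" and e: "perles_var_index i j = perles_var_index i' j'"
  shows "i = i' \<and> j = j'"
proof -
  have ii: "i = i'"
  proof (rule ccontr)
    assume "i \<noteq> i'"
    then consider "i < i'" | "i' < i" by linarith
    then show False
    proof cases
      case 1
      then have "off (Suc i) \<le> off i'" by (intro off_mono) simp
      then show False using vi_lt[OF s] vi_ge[of i' j'] e by simp
    next
      case 2
      then have "off (Suc i') \<le> off i" by (intro off_mono) simp
      then show False using vi_lt[OF s'] vi_ge[of i j] e by simp
    qed
  qed
  have cc: "card {c. c < j \<and> perles_supp i c} = card {c. c < j' \<and> perles_supp i c}"
    using e unfolding vi_eq ii by simp
  have jj: "j = j'"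
  proof (rule ccontr)
    assume "j \<noteq> j'"
    then consider "j < j'" | "j' < j" by linarith
    then show False
    proof cases
      case 1
      have "card {c. c < j \<and> perles_supp i c} < card {c. c < j' \<and> perles_supp i c}"
        by (rule psubset_card_mono) (use 1 s in auto)
      then show False using cc by simp
    next
      case 2
      have "card {c. c < j' \<and> perles_supp i c} < card {c. c < j \<and> perles_supp i c}"
        by (rule psubset_card_mono) (use 2 s' ii in auto)
      then show False using cc by simp
    qed
  qed
  show ?thesis using ii jj by simp
qed

lemma PR_X: "perles_supp i j \<Longrightarrow> X i j \<in> PR"
  unfolding X_def by (rule PR_Var) (rule vi_bound)

lemma II_cancel_X: "perles_supp i j \<Longrightarrow> p \<in> PR \<Longrightarrow> X i j * p \<in> II \<Longrightarrow> p \<in> II"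
  unfolding X_def by (rule II_cancel_Var[OF vi_bound])


subsection \<open>Points of the slack variety\<close>

definition pidx :: "nat \<Rightarrow> nat \<times> nat" where
  "pidx k = (THE p. perles_supp (fst p) (snd p) \<and> perles_var_index (fst p) (snd p) = k)"

lemma pidx_eq: "perles_supp i j \<Longrightarrow> pidx (perles_var_index i j) = (i, j)"
  unfolding pidx_def
  by (rule the_equality) (auto dest: vi_inj)

definition zpt :: "complex \<Rightarrow> nat \<Rightarrow> complex" where
  "zpt r k = (if \<exists>i j. perles_supp i j \<and> perles_var_index i j = k
              then emb r (zval (fst (pidx k)) (snd (pidx k))) else 1)"

lemma zpt_X: "perles_supp i j \<Longrightarrow> zpt r (perles_var_index i j) = emb r (zval i j)"
  unfolding zpt_def using pidx_eq[of i j] by auto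

lemma zpt_nz: "r = ph1 \<or> r = ph2 \<Longrightarrow> zpt r k \<noteq> 0"
proof -
  assume r: "r = ph1 \<or> r = ph2"
  show ?thesis
  proof (cases "\<exists>i j. perles_supp i j \<and> perles_var_index i j = k")
    case True
    then obtain i j where ij: "perles_supp i j" "perles_var_index i j = k" by blast
    then have "zpt r k = emb r (zval i j)" using zpt_X by metis
    moreover have "emb ph1 (zval i j) \<noteq> 0 \<and> emb ph2 (zval i j) \<noteq> 0"
      by (rule emb_nz[OF zval_nz[OF ij(1)]])
    ultimately show ?thesis using r by auto
  next
    case False
    show ?thesis unfolding zpt_def if_not_P[OF False] by simp
  qed
qed

lemma ev_X: "perles_supp i j \<Longrightarrow> ev (zpt r) (X i j) = emb r (zval i j)"
  unfolding X_def ev_Var by (rule zpt_X)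

definition VV :: "complex \<Rightarrow> complex mat" where
  "VV r = mat 12 34 (\<lambda>(i,j). \<Sum>l<9. emb r (Ktab ! i ! l) * emb r (Btab ! l ! j))"

lemma emb_zval: "goodr r \<Longrightarrow> emb r (zval i j) = (\<Sum>l<9. emb r (Ktab ! i ! l) * emb r (Btab ! l ! j))"
  unfolding zval_def emb_zsum map_map comp_def sum_list_upt_lessThan by (simp add: emb_mul)

lemma map_slack: "goodr r \<Longrightarrow> map_mat (ev (zpt r)) perles_slack = VV r"
proof (rule eq_matI)
  fix i j assume g: "goodr r" and ij: "i < dim_row (VV r)" "j < dim_col (VV r)"
  then have i: "i < 12" and j: "j < 34" unfolding VV_def by auto
  have "map_mat (ev (zpt r)) perles_slack $$ (i, j) = ev (zpt r) (perles_slack $$ (i,j))"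
    using i j by simp
  also have "\<dots> = emb r (zval i j)"
    using i j slack_entry[OF i j] ev_X[of i j r] zval_zero[OF i j] by (auto simp: ev_zero)
  also have "\<dots> = VV r $$ (i, j)" unfolding emb_zval[OF g] VV_def using i j by simp
  finally show "map_mat (ev (zpt r)) perles_slack $$ (i, j) = VV r $$ (i, j)" .
qed (auto simp: VV_def)

lemma rank_VV: "vec_space.rank 12 (VV r) \<le> 9"
  unfolding VV_def by (rule rank_sum_outer)

lemma map_submatrix:
  assumes "I \<subseteq> {..<dim_row A}" "J \<subseteq> {..<dim_col A}"
  shows "map_mat f (submatrix A I J) = submatrix (map_mat f A) I J"
proof (rule eq_matI)
  have eI: "{i. i < dim_row A \<and> i \<in> I} = I" and eJ: "{j. j < dim_col A \<and> j \<in> J} = J" using assms by auto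
  fix i j assume "i < dim_row (submatrix (map_mat f A) I J)" "j < dim_col (submatrix (map_mat f A) I J)"
  then have i: "i < card I" and j: "j < card J" unfolding dim_submatrix using eI eJ by auto
  have pi: "pick I i < dim_row A" using pick_in_set_le[OF i] assms(1) by auto
  have pj: "pick J j < dim_col A" using pick_in_set_le[OF j] assms(2) by auto
  have i': "i < card {i. i < dim_row A \<and> i \<in> I}" "j < card {j. j < dim_col A \<and> j \<in> J}" using i j eI eJ by auto
  have i'': "i < card {i. i < dim_row (map_mat f A) \<and> i \<in> I}" "j < card {j. j < dim_col (map_mat f A) \<and> j \<in> J}" using i' by auto
  show "map_mat f (submatrix A I J) $$ (i, j) = submatrix (map_mat f A) I J $$ (i, j)"
    using i' i'' pi pj by (simp add: submatrix_index dim_submatrix)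
qed (auto simp: dim_submatrix)

lemma minors_vanish:
  assumes g: "goodr r" and m: "d \<in> minors 10 perles_slack"
  shows "ev (zpt r) d = 0"
proof -
  obtain I J where IJ: "d = det (submatrix perles_slack I J)" "I \<subseteq> {..<12}" "J \<subseteq> {..<34}" "card I = 10" "card J = 10"
    using m unfolding minors_def by auto
  interpret h: comm_ring_hom "ev (zpt r)" by (rule ev_hom)
  have "ev (zpt r) d = det (map_mat (ev (zpt r)) (submatrix perles_slack I J))"
    unfolding IJ(1) by simp
  also have "\<dots> = det (submatrix (VV r) I J)"
    using IJ(2,3) map_submatrix[of I perles_slack J "ev (zpt r)"] map_slack[OF g] by simp
  also have "\<dots> = 0"
    by (rule minor_zero_low_rank[of _ 12 34]) (use rank_VV[of r] IJ in \<open>auto simp: VV_def\<close>)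
  finally show ?thesis .
qed

lemma ev_prod: "finite A \<Longrightarrow> ev z (\<Prod>a\<in>A. f a) = (\<Prod>a\<in>A. ev z (f a))"
  by (induction A rule: finite_induct) (auto simp: ev_one ev_mult)

lemma ev_pow: "ev z (p ^ k) = ev z p ^ k"
  by (induction k) (auto simp: ev_one ev_mult)

lemma JJ_vanish:
  assumes "a \<in> JJ" "\<forall>g\<in>minors 10 perles_slack. ev z g = 0"
  shows "ev z a = 0"
proof -
  obtain F c where 1: "a = (\<Sum>g\<in>F. c g * g)" "F \<subseteq> minors 10 perles_slack"
    using assms(1) unfolding ideal_gen_in_def by blast
  have "ev z a = (\<Sum>g\<in>F. ev z (c g) * ev z g)" unfolding 1 ev_sum ev_mult ..
  also have "\<dots> = 0" using 1(2) assms(2) by (auto intro!: sum.neutral)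
  finally show ?thesis .
qed

lemma II_vanish:
  assumes "p \<in> II" "\<forall>g\<in>minors 10 perles_slack. ev z g = 0" "\<forall>k<120. z k \<noteq> 0"
  shows "ev z p = 0"
proof -
  obtain k where k: "hh ^ k * p \<in> JJ" using assms(1) unfolding II_def' saturation_in_def by blast
  have "ev z (hh ^ k * p) = 0" by (rule JJ_vanish[OF k assms(2)])
  then have "(\<Prod>i<120. z i) ^ k * ev z p = 0" by (simp add: ev_mult ev_pow ev_prod ev_Var)
  moreover have "(\<Prod>i<120. z i) \<noteq> 0" using assms(3) by simp
  ultimately show ?thesis by simp
qed

lemma II_vanish_pt: "p \<in> II \<Longrightarrow> r = ph1 \<or> r = ph2 \<Longrightarrow> ev (zpt r) p = 0"
proof -
  assume p: "p \<in> II" and r: "r = ph1 \<or> r = ph2"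
  have g: "goodr r" using r goodr_ph by auto
  show ?thesis
    by (rule II_vanish[OF p]) (use minors_vanish[OF g] zpt_nz[OF r] in auto)
qed


definition xm :: "(nat \<times> nat) list \<Rightarrow> mpoly" where
  "xm l = prod_list (map (\<lambda>(i,j). X i j) l)"

abbreviation allsupp :: "(nat \<times> nat) list \<Rightarrow> bool" where
  "allsupp l \<equiv> list_all (\<lambda>(i,j). perles_supp i j) l"

lemmas supp_simps = perles_supp_def perles_rows_def

lemma ev_uminus: "ev z (- p) = - ev z p"
  using ev_add[of z "- p" p] by (simp add: ev_zero eq_neg_iff_add_eq_0)
lemma ev_diff: "ev z (p - q) = ev z p - ev z q"
  using ev_add[of z p "- q"] ev_uminus[of z q] by simp

lemma xm_Nil: "xm [] = 1" unfolding xm_def by simp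
lemma xm_Cons: "xm ((i,j) # l) = X i j * xm l" unfolding xm_def by simp

lemma xm_append: "xm (l1 @ l2) = xm l1 * xm l2" unfolding xm_def by simp

lemma prod_list_mset: "prod_list (map f l) = prod_mset (image_mset f (mset l))"
  by (induction l) auto

lemma xm_mset: "mset l1 = mset l2 \<Longrightarrow> xm l1 = xm l2"
  unfolding xm_def prod_list_mset by simp

lemma xm_sort: "sort l1 = sort l2 \<Longrightarrow> xm l1 = xm l2"
  by (rule xm_mset) (metis mset_sort)

lemma PR_xm: "allsupp l \<Longrightarrow> xm l \<in> PR"
proof (induction l)
  case Nil then show ?case by (simp add: xm_Nil PR_one)
next
  case (Cons p l) then show ?case by (cases p) (auto simp: xm_Cons intro!: PR_mult PR_X)
qed

lemma II_cancel_xm: "allsupp l \<Longrightarrow> p \<in> PR \<Longrightarrow> xm l * p \<in> II \<Longrightarrow> p \<in> II"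
proof (induction l)
  case Nil then show ?case by (simp add: xm_Nil)
next
  case (Cons q l)
  obtain i j where q: "q = (i,j)" by (cases q)
  have s: "perles_supp i j" "allsupp l" using Cons.prems(1) q by auto
  have "X i j * (xm l * p) \<in> II" using Cons.prems(3) q by (simp add: xm_Cons mult.assoc)
  then have "xm l * p \<in> II" by (rule II_cancel_X[OF s(1) PR_mult[OF PR_xm[OF s(2)] Cons.prems(2)]])
  then show ?case using Cons.IH s(2) Cons.prems(2) by blast
qed

lemma ev_xm: "allsupp l \<Longrightarrow> goodr r \<Longrightarrow> ev (zpt r) (xm l) = emb r (zprod (map (\<lambda>(i,j). zval i j) l))"
proof (induction l)
  case Nil then show ?case by (simp add: xm_Nil ev_one zprod_def)
next
  case (Cons q l)
  obtain i j where q: "q = (i,j)" by (cases q)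
  then show ?case using Cons by (auto simp: xm_Cons ev_mult ev_X emb_mul zprod_def)
qed

lemma minor_mem:
  assumes "sorted_wrt (<) xs" "sorted_wrt (<) ys" "\<forall>x\<in>set xs. x < 12" "\<forall>y\<in>set ys. y < 34"
    "length xs = 10" "length ys = 10"
  shows "dexp perles_slack xs ys \<in> minors 10 perles_slack"
proof -
  have e: "det (submatrix perles_slack (set xs) (set ys)) = dexp perles_slack xs ys"
    using assms by (simp add: submatrix_subl det_subl_dexp)
  have dx: "distinct xs" "distinct ys" using assms(1,2) strict_sorted_iff by blast+
  have "card (set xs) = 10" "card (set ys) = 10" using dx assms(5,6) by (simp_all add: distinct_card)
  then show ?thesis unfolding minors_def e[symmetric] using assms(3,4) by auto
qed

lemma minor_cancel:
  assumes "d \<in> minors 10 perles_slack" "d = of_int \<beta> * (xm F * q)" "\<beta> * \<beta> = 1" "allsupp F" "q \<in> PR"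
  shows "q \<in> II"
proof -
  have dP: "d \<in> PR" unfolding assms(2) by (intro PR_mult PR_of_int PR_xm assms(4,5))
  have "d \<in> II" by (rule II_JJ[OF JJ_gen[OF assms(1)] dP])
  then have "of_int \<beta> * d \<in> II" by (rule II_mult[OF PR_of_int])
  moreover have "of_int \<beta> * d = xm F * q" unfolding assms(2)
    by (simp add: mult.assoc[symmetric] of_int_mult[symmetric] assms(3))
  ultimately have "xm F * q \<in> II" by simp
  then show ?thesis by (rule II_cancel_xm[OF assms(4,5)])
qed

lemma rel_PR: "allsupp a \<Longrightarrow> allsupp b \<Longrightarrow> xm a - of_int e * xm b \<in> PR"
  by (intro PR_diff PR_mult PR_of_int PR_xm)

lemma rel_flip:
  assumes "xm a - of_int e * xm b \<in> II" "e * e = 1"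
  shows "xm b - of_int e * xm a \<in> II"
proof -
  have "of_int (- e) * (xm a - of_int e * xm b) \<in> II" by (rule II_mult[OF PR_of_int assms(1)])
  moreover have "of_int (- e) * (xm a - of_int e * xm b) = xm b - of_int e * xm a"
    by (simp add: algebra_simps mult.assoc[symmetric] of_int_mult[symmetric] assms(2))
  ultimately show ?thesis by simp
qed

lemma rel_mult:
  assumes "xm a - of_int \<alpha> * xm b \<in> II" "xm a' - of_int \<beta> * xm b' \<in> II"
    "allsupp a'" "allsupp b"
  shows "xm (a @ a') - of_int (\<alpha> * \<beta>) * xm (b @ b') \<in> II"
proof -
  have "xm a' * (xm a - of_int \<alpha> * xm b) + (of_int \<alpha> * xm b) * (xm a' - of_int \<beta> * xm b') \<in> II"
    by (intro II_add II_mult PR_mult PR_of_int PR_xm assms)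
  moreover have "xm a' * (xm a - of_int \<alpha> * xm b) + (of_int \<alpha> * xm b) * (xm a' - of_int \<beta> * xm b')
      = xm (a @ a') - of_int (\<alpha> * \<beta>) * xm (b @ b')"
    by (simp add: xm_append algebra_simps)
  ultimately show ?thesis by simp
qed

lemma II_zero: "0 \<in> II" by (rule II_JJ[OF JJ_zero PR_zero])

lemma rel_refl: "xm a - of_int 1 * xm a \<in> II" using II_zero by simp

lemma bin0_mem: "dexp perles_slack [1, 2, 3, 4, 5, 6, 8, 9, 10, 11] [0, 5, 8, 14, 16, 23, 25, 27, 30, 33] \<in> minors 10 perles_slack"
  by (rule minor_mem) auto

lemma bin0_eq: "dexp perles_slack [1, 2, 3, 4, 5, 6, 8, 9, 10, 11] [0, 5, 8, 14, 16, 23, 25, 27, 30, 33] = of_int (-1) * (xm [(3, 16), (5, 33), (8, 0), (9, 27), (10, 23), (11, 5)] * (xm [(1, 8), (2, 14), (4, 25), (6, 30)] - of_int (1) * xm [(1, 14), (2, 25), (4, 30), (6, 8)]))"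
  by (simp add: slack_entry perles_supp_def perles_rows_def upt_conv_Cons dl_def) (simp add: xm_def algebra_simps)

lemma bin0_rel: "xm [(1, 8), (2, 14), (4, 25), (6, 30)] - of_int (1) * xm [(1, 14), (2, 25), (4, 30), (6, 8)] \<in> II"
  by (rule minor_cancel[OF bin0_mem bin0_eq], simp, simp add: supp_simps, rule rel_PR; simp add: supp_simps)

lemma bin1_mem: "dexp perles_slack [1, 2, 3, 4, 5, 6, 8, 9, 10, 11] [1, 4, 5, 7, 11, 12, 14, 18, 22, 30] \<in> minors 10 perles_slack"
  by (rule minor_mem) auto

lemma bin1_eq: "dexp perles_slack [1, 2, 3, 4, 5, 6, 8, 9, 10, 11] [1, 4, 5, 7, 11, 12, 14, 18, 22, 30] = of_int (-1) * (xm [(1, 14), (2, 18), (5, 12), (8, 7), (10, 22), (11, 5)] * (xm [(3, 11), (4, 30), (6, 1), (9, 4)] - of_int (1) * xm [(3, 4), (4, 11), (6, 30), (9, 1)]))"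
  by (simp add: slack_entry perles_supp_def perles_rows_def upt_conv_Cons dl_def) (simp add: xm_def algebra_simps)

lemma bin1_rel: "xm [(3, 11), (4, 30), (6, 1), (9, 4)] - of_int (1) * xm [(3, 4), (4, 11), (6, 30), (9, 1)] \<in> II"
  by (rule minor_cancel[OF bin1_mem bin1_eq], simp, simp add: supp_simps, rule rel_PR; simp add: supp_simps)

lemma bin2_mem: "dexp perles_slack [0, 1, 2, 4, 5, 6, 8, 9, 10, 11] [0, 2, 7, 8, 11, 12, 14, 25, 26, 32] \<in> minors 10 perles_slack"
  by (rule minor_mem) auto

lemma bin2_eq: "dexp perles_slack [0, 1, 2, 4, 5, 6, 8, 9, 10, 11] [0, 2, 7, 8, 11, 12, 14, 25, 26, 32] = of_int (1) * (xm [(0, 14), (1, 7), (2, 25), (5, 12), (6, 8), (8, 0), (9, 26), (10, 2)] * (xm [(4, 11), (11, 32)] - of_int (1) * xm [(4, 32), (11, 11)]))"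
  by (simp add: slack_entry perles_supp_def perles_rows_def upt_conv_Cons dl_def) (simp add: xm_def algebra_simps)

lemma bin2_rel: "xm [(4, 11), (11, 32)] - of_int (1) * xm [(4, 32), (11, 11)] \<in> II"
  by (rule minor_cancel[OF bin2_mem bin2_eq], simp, simp add: supp_simps, rule rel_PR; simp add: supp_simps)

lemma bin3_mem: "dexp perles_slack [0, 1, 3, 4, 6, 7, 8, 9, 10, 11] [0, 4, 10, 13, 23, 25, 29, 31, 32, 33] \<in> minors 10 perles_slack"
  by (rule minor_mem) auto

lemma bin3_eq: "dexp perles_slack [0, 1, 3, 4, 6, 7, 8, 9, 10, 11] [0, 4, 10, 13, 23, 25, 29, 31, 32, 33] = of_int (1) * (xm [(0, 4), (1, 13), (3, 29), (6, 33), (8, 0), (9, 31), (10, 23), (11, 10)] * (xm [(4, 25), (7, 32)] - of_int (1) * xm [(4, 32), (7, 25)]))"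
  by (simp add: slack_entry perles_supp_def perles_rows_def upt_conv_Cons dl_def) (simp add: xm_def algebra_simps)

lemma bin3_rel: "xm [(4, 25), (7, 32)] - of_int (1) * xm [(4, 32), (7, 25)] \<in> II"
  by (rule minor_cancel[OF bin3_mem bin3_eq], simp, simp add: supp_simps, rule rel_PR; simp add: supp_simps)

lemma bin4_mem: "dexp perles_slack [2, 3, 4, 5, 6, 7, 8, 9, 10, 11] [0, 3, 4, 6, 7, 8, 11, 14, 16, 18] \<in> minors 10 perles_slack"
  by (rule minor_mem) auto

lemma bin4_eq: "dexp perles_slack [2, 3, 4, 5, 6, 7, 8, 9, 10, 11] [0, 3, 4, 6, 7, 8, 11, 14, 16, 18] = of_int (1) * (xm [(2, 14), (4, 7), (5, 0), (6, 8), (7, 18), (8, 3), (9, 4), (10, 6)] * (xm [(3, 11), (11, 16)] - of_int (1) * xm [(3, 16), (11, 11)]))"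
  by (simp add: slack_entry perles_supp_def perles_rows_def upt_conv_Cons dl_def) (simp add: xm_def algebra_simps)

lemma bin4_rel: "xm [(3, 11), (11, 16)] - of_int (1) * xm [(3, 16), (11, 11)] \<in> II"
  by (rule minor_cancel[OF bin4_mem bin4_eq], simp, simp add: supp_simps, rule rel_PR; simp add: supp_simps)

lemma bin5_mem: "dexp perles_slack [0, 1, 3, 5, 6, 7, 8, 9, 10, 11] [2, 3, 6, 7, 15, 21, 24, 25, 28, 33] \<in> minors 10 perles_slack"
  by (rule minor_mem) auto

lemma bin5_eq: "dexp perles_slack [0, 1, 3, 5, 6, 7, 8, 9, 10, 11] [2, 3, 6, 7, 15, 21, 24, 25, 28, 33] = of_int (1) * (xm [(0, 3), (3, 15), (5, 33), (6, 24), (8, 7), (9, 28)] * (xm [(1, 21), (7, 2), (10, 6), (11, 25)] - of_int (1) * xm [(1, 6), (7, 25), (10, 2), (11, 21)]))"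
  by (simp add: slack_entry perles_supp_def perles_rows_def upt_conv_Cons dl_def) (simp add: xm_def algebra_simps)

lemma bin5_rel: "xm [(1, 21), (7, 2), (10, 6), (11, 25)] - of_int (1) * xm [(1, 6), (7, 25), (10, 2), (11, 21)] \<in> II"
  by (rule minor_cancel[OF bin5_mem bin5_eq], simp, simp add: supp_simps, rule rel_PR; simp add: supp_simps)

lemma bin6_mem: "dexp perles_slack [1, 2, 3, 4, 5, 6, 8, 9, 10, 11] [1, 2, 5, 6, 7, 11, 14, 17, 21, 23] \<in> minors 10 perles_slack"
  by (rule minor_mem) auto

lemma bin6_eq: "dexp perles_slack [1, 2, 3, 4, 5, 6, 8, 9, 10, 11] [1, 2, 5, 6, 7, 11, 14, 17, 21, 23] = of_int (1) * (xm [(3, 11), (4, 21), (5, 17), (6, 23), (8, 7), (9, 1), (10, 2), (11, 5)] * (xm [(1, 6), (2, 14)] - of_int (1) * xm [(1, 14), (2, 6)]))"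
  by (simp add: slack_entry perles_supp_def perles_rows_def upt_conv_Cons dl_def) (simp add: xm_def algebra_simps)

lemma bin6_rel: "xm [(1, 6), (2, 14)] - of_int (1) * xm [(1, 14), (2, 6)] \<in> II"
  by (rule minor_cancel[OF bin6_mem bin6_eq], simp, simp add: supp_simps, rule rel_PR; simp add: supp_simps)

lemma bin7_mem: "dexp perles_slack [0, 1, 3, 4, 5, 7, 8, 9, 10, 11] [1, 7, 8, 9, 15, 21, 23, 24, 31, 33] \<in> minors 10 perles_slack"
  by (rule minor_mem) auto

lemma bin7_eq: "dexp perles_slack [0, 1, 3, 4, 5, 7, 8, 9, 10, 11] [1, 7, 8, 9, 15, 21, 23, 24, 31, 33] = of_int (-1) * (xm [(0, 15), (3, 23), (4, 9), (5, 33), (7, 31), (8, 7), (9, 1), (10, 24)] * (xm [(1, 8), (11, 21)] - of_int (1) * xm [(1, 21), (11, 8)]))"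
  by (simp add: slack_entry perles_supp_def perles_rows_def upt_conv_Cons dl_def) (simp add: xm_def algebra_simps)

lemma bin7_rel: "xm [(1, 8), (11, 21)] - of_int (1) * xm [(1, 21), (11, 8)] \<in> II"
  by (rule minor_cancel[OF bin7_mem bin7_eq], simp, simp add: supp_simps, rule rel_PR; simp add: supp_simps)

lemma bin8_mem: "dexp perles_slack [2, 3, 4, 5, 6, 7, 8, 9, 10, 11] [1, 4, 7, 8, 12, 13, 16, 19, 21, 31] \<in> minors 10 perles_slack"
  by (rule minor_mem) auto

lemma bin8_eq: "dexp perles_slack [2, 3, 4, 5, 6, 7, 8, 9, 10, 11] [1, 4, 7, 8, 12, 13, 16, 19, 21, 31] = of_int (-1) * (xm [(2, 13), (4, 21), (5, 19), (7, 31), (8, 7), (10, 12)] * (xm [(3, 16), (6, 1), (9, 4), (11, 8)] - of_int (1) * xm [(3, 4), (6, 8), (9, 1), (11, 16)]))"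
  by (simp add: slack_entry perles_supp_def perles_rows_def upt_conv_Cons dl_def) (simp add: xm_def algebra_simps)

lemma bin8_rel: "xm [(3, 16), (6, 1), (9, 4), (11, 8)] - of_int (1) * xm [(3, 4), (6, 8), (9, 1), (11, 16)] \<in> II"
  by (rule minor_cancel[OF bin8_mem bin8_eq], simp, simp add: supp_simps, rule rel_PR; simp add: supp_simps)

lemma bin0_relf: "xm [(1, 14), (2, 25), (4, 30), (6, 8)] - of_int (1) * xm [(1, 8), (2, 14), (4, 25), (6, 30)] \<in> II"
  by (rule rel_flip[OF bin0_rel]) simp

lemma chain0: "xm [(1, 14), (2, 25), (4, 30), (6, 8)] - of_int (1) * xm [(1, 8), (2, 14), (4, 25), (6, 30)] \<in> II"
  by (rule bin0_relf)

lemma bin1_relf: "xm [(3, 4), (4, 11), (6, 30), (9, 1)] - of_int (1) * xm [(3, 11), (4, 30), (6, 1), (9, 4)] \<in> II"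
  by (rule rel_flip[OF bin1_rel]) simp

lemma chain1: "xm ([(1, 14), (2, 25), (4, 30), (6, 8)] @ [(3, 4), (4, 11), (6, 30), (9, 1)]) - of_int ((1) * (1)) * xm ([(1, 8), (2, 14), (4, 25), (6, 30)] @ [(3, 11), (4, 30), (6, 1), (9, 4)]) \<in> II"
  by (rule rel_mult[OF chain0 bin1_relf]) (simp_all add: supp_simps)

lemma bin2_relf: "xm [(4, 32), (11, 11)] - of_int (1) * xm [(4, 11), (11, 32)] \<in> II"
  by (rule rel_flip[OF bin2_rel]) simp

lemma chain2: "xm (([(1, 14), (2, 25), (4, 30), (6, 8)] @ [(3, 4), (4, 11), (6, 30), (9, 1)]) @ [(4, 32), (11, 11)]) - of_int (((1) * (1)) * (1)) * xm (([(1, 8), (2, 14), (4, 25), (6, 30)] @ [(3, 11), (4, 30), (6, 1), (9, 4)]) @ [(4, 11), (11, 32)]) \<in> II"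
  by (rule rel_mult[OF chain1 bin2_relf]) (simp_all add: supp_simps)

lemma chain3: "xm ((([(1, 14), (2, 25), (4, 30), (6, 8)] @ [(3, 4), (4, 11), (6, 30), (9, 1)]) @ [(4, 32), (11, 11)]) @ [(4, 25), (7, 32)]) - of_int ((((1) * (1)) * (1)) * (1)) * xm ((([(1, 8), (2, 14), (4, 25), (6, 30)] @ [(3, 11), (4, 30), (6, 1), (9, 4)]) @ [(4, 11), (11, 32)]) @ [(4, 32), (7, 25)]) \<in> II"
  by (rule rel_mult[OF chain2 bin3_rel]) (simp_all add: supp_simps)

lemma chain4: "xm (((([(1, 14), (2, 25), (4, 30), (6, 8)] @ [(3, 4), (4, 11), (6, 30), (9, 1)]) @ [(4, 32), (11, 11)]) @ [(4, 25), (7, 32)]) @ [(3, 11), (11, 16)]) - of_int (((((1) * (1)) * (1)) * (1)) * (1)) * xm (((([(1, 8), (2, 14), (4, 25), (6, 30)] @ [(3, 11), (4, 30), (6, 1), (9, 4)]) @ [(4, 11), (11, 32)]) @ [(4, 32), (7, 25)]) @ [(3, 16), (11, 11)]) \<in> II"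
  by (rule rel_mult[OF chain3 bin4_rel]) (simp_all add: supp_simps)

lemma chain5: "xm ((((([(1, 14), (2, 25), (4, 30), (6, 8)] @ [(3, 4), (4, 11), (6, 30), (9, 1)]) @ [(4, 32), (11, 11)]) @ [(4, 25), (7, 32)]) @ [(3, 11), (11, 16)]) @ [(1, 21), (7, 2), (10, 6), (11, 25)]) - of_int ((((((1) * (1)) * (1)) * (1)) * (1)) * (1)) * xm ((((([(1, 8), (2, 14), (4, 25), (6, 30)] @ [(3, 11), (4, 30), (6, 1), (9, 4)]) @ [(4, 11), (11, 32)]) @ [(4, 32), (7, 25)]) @ [(3, 16), (11, 11)]) @ [(1, 6), (7, 25), (10, 2), (11, 21)]) \<in> II"
  by (rule rel_mult[OF chain4 bin5_rel]) (simp_all add: supp_simps)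

lemma chain6: "xm (((((([(1, 14), (2, 25), (4, 30), (6, 8)] @ [(3, 4), (4, 11), (6, 30), (9, 1)]) @ [(4, 32), (11, 11)]) @ [(4, 25), (7, 32)]) @ [(3, 11), (11, 16)]) @ [(1, 21), (7, 2), (10, 6), (11, 25)]) @ [(1, 6), (2, 14)]) - of_int (((((((1) * (1)) * (1)) * (1)) * (1)) * (1)) * (1)) * xm (((((([(1, 8), (2, 14), (4, 25), (6, 30)] @ [(3, 11), (4, 30), (6, 1), (9, 4)]) @ [(4, 11), (11, 32)]) @ [(4, 32), (7, 25)]) @ [(3, 16), (11, 11)]) @ [(1, 6), (7, 25), (10, 2), (11, 21)]) @ [(1, 14), (2, 6)]) \<in> II"
  by (rule rel_mult[OF chain5 bin6_rel]) (simp_all add: supp_simps)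

lemma chain7: "xm ((((((([(1, 14), (2, 25), (4, 30), (6, 8)] @ [(3, 4), (4, 11), (6, 30), (9, 1)]) @ [(4, 32), (11, 11)]) @ [(4, 25), (7, 32)]) @ [(3, 11), (11, 16)]) @ [(1, 21), (7, 2), (10, 6), (11, 25)]) @ [(1, 6), (2, 14)]) @ [(1, 8), (11, 21)]) - of_int ((((((((1) * (1)) * (1)) * (1)) * (1)) * (1)) * (1)) * (1)) * xm ((((((([(1, 8), (2, 14), (4, 25), (6, 30)] @ [(3, 11), (4, 30), (6, 1), (9, 4)]) @ [(4, 11), (11, 32)]) @ [(4, 32), (7, 25)]) @ [(3, 16), (11, 11)]) @ [(1, 6), (7, 25), (10, 2), (11, 21)]) @ [(1, 14), (2, 6)]) @ [(1, 21), (11, 8)]) \<in> II"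
  by (rule rel_mult[OF chain6 bin7_rel]) (simp_all add: supp_simps)

lemma chain8: "xm (((((((([(1, 14), (2, 25), (4, 30), (6, 8)] @ [(3, 4), (4, 11), (6, 30), (9, 1)]) @ [(4, 32), (11, 11)]) @ [(4, 25), (7, 32)]) @ [(3, 11), (11, 16)]) @ [(1, 21), (7, 2), (10, 6), (11, 25)]) @ [(1, 6), (2, 14)]) @ [(1, 8), (11, 21)]) @ [(3, 16), (6, 1), (9, 4), (11, 8)]) - of_int (((((((((1) * (1)) * (1)) * (1)) * (1)) * (1)) * (1)) * (1)) * (1)) * xm (((((((([(1, 8), (2, 14), (4, 25), (6, 30)] @ [(3, 11), (4, 30), (6, 1), (9, 4)]) @ [(4, 11), (11, 32)]) @ [(4, 32), (7, 25)]) @ [(3, 16), (11, 11)]) @ [(1, 6), (7, 25), (10, 2), (11, 21)]) @ [(1, 14), (2, 6)]) @ [(1, 21), (11, 8)]) @ [(3, 4), (6, 8), (9, 1), (11, 16)]) \<in> II"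
  by (rule rel_mult[OF chain7 bin8_rel]) (simp_all add: supp_simps)

lemma chainC: "xm ((((((((([(1, 14), (2, 25), (4, 30), (6, 8)] @ [(3, 4), (4, 11), (6, 30), (9, 1)]) @ [(4, 32), (11, 11)]) @ [(4, 25), (7, 32)]) @ [(3, 11), (11, 16)]) @ [(1, 21), (7, 2), (10, 6), (11, 25)]) @ [(1, 6), (2, 14)]) @ [(1, 8), (11, 21)]) @ [(3, 16), (6, 1), (9, 4), (11, 8)]) @ ([(2, 6), (7, 25), (10, 2), (11, 32)] @ [(2, 6), (7, 25), (10, 2), (11, 32)])) - of_int ((((((((((1) * (1)) * (1)) * (1)) * (1)) * (1)) * (1)) * (1)) * (1)) * 1) * xm ((((((((([(1, 8), (2, 14), (4, 25), (6, 30)] @ [(3, 11), (4, 30), (6, 1), (9, 4)]) @ [(4, 11), (11, 32)]) @ [(4, 32), (7, 25)]) @ [(3, 16), (11, 11)]) @ [(1, 6), (7, 25), (10, 2), (11, 21)]) @ [(1, 14), (2, 6)]) @ [(1, 21), (11, 8)]) @ [(3, 4), (6, 8), (9, 1), (11, 16)]) @ ([(2, 6), (7, 25), (10, 2), (11, 32)] @ [(2, 6), (7, 25), (10, 2), (11, 32)])) \<in> II"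
  by (rule rel_mult[OF chain8 rel_refl]) (simp_all add: supp_simps)

lemma chainD: "xm [(1, 8), (2, 14), (4, 25), (6, 30), (3, 11), (4, 30), (6, 1), (9, 4), (4, 11), (11, 32), (4, 32), (7, 25), (3, 16), (11, 11), (1, 6), (7, 25), (10, 2), (11, 21), (1, 14), (2, 6), (1, 21), (11, 8), (3, 4), (6, 8), (9, 1), (11, 16)] * (xm ([(2, 25), (7, 2), (10, 6), (11, 32)] @ [(2, 6), (7, 32), (10, 2), (11, 25)]) - of_int (1) * xm ([(2, 6), (7, 25), (10, 2), (11, 32)] @ [(2, 6), (7, 25), (10, 2), (11, 32)])) \<in> II"
proof -
  have e1: "xm ((((((((([(1, 14), (2, 25), (4, 30), (6, 8)] @ [(3, 4), (4, 11), (6, 30), (9, 1)]) @ [(4, 32), (11, 11)]) @ [(4, 25), (7, 32)]) @ [(3, 11), (11, 16)]) @ [(1, 21), (7, 2), (10, 6), (11, 25)]) @ [(1, 6), (2, 14)]) @ [(1, 8), (11, 21)]) @ [(3, 16), (6, 1), (9, 4), (11, 8)]) @ ([(2, 6), (7, 25), (10, 2), (11, 32)] @ [(2, 6), (7, 25), (10, 2), (11, 32)])) = xm [(1, 8), (2, 14), (4, 25), (6, 30), (3, 11), (4, 30), (6, 1), (9, 4), (4, 11), (11, 32), (4, 32), (7, 25), (3, 16), (11, 11), (1, 6), (7, 25), (10, 2), (11, 21), (1, 14), (2, 6), (1, 21), (11, 8), (3, 4), (6, 8), (9, 1), (11, 16)] * xm ([(2, 25), (7, 2), (10, 6), (11,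 32)] @ [(2, 6), (7, 32), (10, 2), (11, 25)])"
    unfolding xm_append[symmetric] by (rule xm_sort) code_simp
  have e2: "xm ((((((((([(1, 8), (2, 14), (4, 25), (6, 30)] @ [(3, 11), (4, 30), (6, 1), (9, 4)]) @ [(4, 11), (11, 32)]) @ [(4, 32), (7, 25)]) @ [(3, 16), (11, 11)]) @ [(1, 6), (7, 25), (10, 2), (11, 21)]) @ [(1, 14), (2, 6)]) @ [(1, 21), (11, 8)]) @ [(3, 4), (6, 8), (9, 1), (11, 16)]) @ ([(2, 6), (7, 25), (10, 2), (11, 32)] @ [(2, 6), (7, 25), (10, 2), (11, 32)])) = xm [(1, 8), (2, 14), (4, 25), (6, 30), (3, 11), (4, 30), (6, 1), (9, 4), (4, 11), (11, 32), (4, 32), (7, 25), (3, 16), (11, 11), (1, 6), (7, 25), (10, 2), (11, 21), (1, 14), (2, 6), (1, 21), (11, 8), (3, 4), (6, 8), (9, 1), (11, 16)] * xm ([(2, 6), (7, 25), (10, 2), (11, 32)] @ [(2, 6), (7, 25), (10, 2), (11, 32)])"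
    unfolding xm_append[symmetric] by simp
  have "xm [(1, 8), (2, 14), (4, 25), (6, 30), (3, 11), (4, 30), (6, 1), (9, 4), (4, 11), (11, 32), (4, 32), (7, 25), (3, 16), (11, 11), (1, 6), (7, 25), (10, 2), (11, 21), (1, 14), (2, 6), (1, 21), (11, 8), (3, 4), (6, 8), (9, 1), (11, 16)] * (xm ([(2, 25), (7, 2), (10, 6), (11, 32)] @ [(2, 6), (7, 32), (10, 2), (11, 25)]) - of_int (1) * xm ([(2, 6), (7, 25), (10, 2), (11, 32)] @ [(2, 6), (7, 25), (10, 2), (11, 32)])) = xm ((((((((([(1, 14), (2, 25), (4, 30), (6, 8)] @ [(3, 4), (4, 11), (6, 30), (9, 1)]) @ [(4, 32), (11, 11)]) @ [(4, 25), (7, 32)]) @ [(3, 11), (11, 16)]) @ [(1, 21), (7, 2), (10, 6), (11, 25)]) @ [(1, 6), (2, 14)]) @ [(1, 8), (11, 21)]) @ [(3, 16), (6, 1), (9, 4), (11, 8)]) @ ([(2, 6), (7, 25), (10, 2), (11, 32)] @ [(2, 6), (7, 25), (10, 2), (11, 32)])) - of_int ((((((((((1) * (1)) * (1)) * (1)) * (1)) * (1)) * (1)) * (1)) * (1)) * 1) * xm ((((((((([(1, 8), (2, 14), (4, 25), (6, 30)] @ [(3, 11), (4, 30), (6, 1), (9, 4)]) @ [(4, 11), (11, 32)]) @ [(4, 32), (7, 25)]) @ [(3, 16), (11, 11)]) @ [(1, 6), (7, 25), (10, 2), (11, 21)]) @ [(1, 14), (2, 6)]) @ [(1, 21), (11,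 8)]) @ [(3, 4), (6, 8), (9, 1), (11, 16)]) @ ([(2, 6), (7, 25), (10, 2), (11, 32)] @ [(2, 6), (7, 25), (10, 2), (11, 32)]))"
    unfolding e1 e2 by (simp add: algebra_simps)
  then show ?thesis using chainC by simp
qed

lemma relR: "xm ([(2, 25), (7, 2), (10, 6), (11, 32)] @ [(2, 6), (7, 32), (10, 2), (11, 25)]) - of_int (1) * xm ([(2, 6), (7, 25), (10, 2), (11, 32)] @ [(2, 6), (7, 25), (10, 2), (11, 32)]) \<in> II"
  by (rule II_cancel_xm[OF _ rel_PR chainD]) (simp_all add: supp_simps)

lemma tri_mem: "dexp perles_slack [0, 2, 3, 5, 6, 7, 8, 9, 10, 11] [1, 2, 3, 6, 7, 13, 25, 26, 28, 32] \<in> minors 10 perles_slack"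
  by (rule minor_mem) auto

lemma tri_eq: "dexp perles_slack [0, 2, 3, 5, 6, 7, 8, 9, 10, 11] [1, 2, 3, 6, 7, 13, 25, 26, 28, 32] = of_int 1 * (xm [(0, 3), (3, 28), (5, 26), (6, 1), (8, 7), (9, 13)] * (of_int (1) * xm [(2, 25), (7, 2), (10, 6), (11, 32)] + of_int (-1) * xm [(2, 6), (7, 32), (10, 2), (11, 25)] + of_int (1) * xm [(2, 6), (7, 25), (10, 2), (11, 32)]))"
  by (simp add: slack_entry perles_supp_def perles_rows_def upt_conv_Cons dl_def) (simp add: xm_def algebra_simps)

lemma tri_rel: "(of_int (1) * xm [(2, 25), (7, 2), (10, 6), (11, 32)] + of_int (-1) * xm [(2, 6), (7, 32), (10, 2), (11, 25)] + of_int (1) * xm [(2, 6), (7, 25), (10, 2), (11, 32)]) \<in> II"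
  by (rule minor_cancel[OF tri_mem tri_eq], simp, simp add: supp_simps, (intro PR_add PR_mult PR_of_int PR_xm; simp add: supp_simps))

lemma Q_rel: "xm [(2, 25), (7, 2), (10, 6), (11, 32)] * xm [(2, 25), (7, 2), (10, 6), (11, 32)] + of_int (1) * (xm [(2, 25), (7, 2), (10, 6), (11, 32)] * xm [(2, 6), (7, 25), (10, 2), (11, 32)]) + of_int (-1) * (xm [(2, 6), (7, 25), (10, 2), (11, 32)] * xm [(2, 6), (7, 25), (10, 2), (11, 32)]) \<in> II"
proof -
  have 1: "xm [(2, 25), (7, 2), (10, 6), (11, 32)] * (of_int (1) * xm [(2, 25), (7, 2), (10, 6), (11, 32)] + of_int (-1) * xm [(2, 6), (7, 32), (10, 2), (11, 25)] + of_int (1) * xm [(2, 6), (7, 25), (10, 2), (11, 32)]) \<in> II" by (rule II_mult[OF PR_xm tri_rel]) (simp add: supp_simps)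
  have 2: "of_int (-1) * (xm ([(2, 25), (7, 2), (10, 6), (11, 32)] @ [(2, 6), (7, 32), (10, 2), (11, 25)]) - of_int (1) * xm ([(2, 6), (7, 25), (10, 2), (11, 32)] @ [(2, 6), (7, 25), (10, 2), (11, 32)])) \<in> II" by (rule II_mult[OF PR_of_int relR])
  have "of_int (1) * (xm [(2, 25), (7, 2), (10, 6), (11, 32)] * (of_int (1) * xm [(2, 25), (7, 2), (10, 6), (11, 32)] + of_int (-1) * xm [(2, 6), (7, 32), (10, 2), (11, 25)] + of_int (1) * xm [(2, 6), (7, 25), (10, 2), (11, 32)]) - of_int (-1) * (xm ([(2, 25), (7, 2), (10, 6), (11, 32)] @ [(2, 6), (7, 32), (10, 2), (11, 25)]) - of_int (1) * xm ([(2, 6), (7, 25), (10, 2), (11, 32)] @ [(2, 6), (7, 25), (10, 2), (11, 32)]))) \<in> II"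
    by (rule II_mult[OF PR_of_int II_diff[OF 1 2]])
  moreover have "of_int (1) * (xm [(2, 25), (7, 2), (10, 6), (11, 32)] * (of_int (1) * xm [(2, 25), (7, 2), (10, 6), (11, 32)] + of_int (-1) * xm [(2, 6), (7, 32), (10, 2), (11, 25)] + of_int (1) * xm [(2, 6), (7, 25), (10, 2), (11, 32)]) - of_int (-1) * (xm ([(2, 25), (7, 2), (10, 6), (11, 32)] @ [(2, 6), (7, 32), (10, 2), (11, 25)]) - of_int (1) * xm ([(2, 6), (7, 25), (10, 2), (11, 32)] @ [(2, 6), (7, 25), (10, 2), (11, 32)]))) = xm [(2, 25), (7, 2), (10, 6), (11, 32)] * xm [(2, 25), (7, 2), (10, 6), (11, 32)] + of_int (1) * (xm [(2, 25), (7, 2), (10, 6), (11, 32)] * xm [(2, 6), (7, 25), (10, 2), (11, 32)]) + of_int (-1) * (xm [(2, 6), (7, 25), (10, 2), (11, 32)] * xm [(2, 6), (7, 25), (10, 2), (11, 32)])"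
    unfolding xm_append by (simp add: algebra_simps)
  ultimately show ?thesis by simp
qed

definition ff :: mpoly where "ff = xm [(2, 25), (7, 2), (10, 6), (11, 32)] - Cst (emb ph1 (0, -1)) * xm [(2, 6), (7, 25), (10, 2), (11, 32)]"
definition gg :: mpoly where "gg = xm [(2, 25), (7, 2), (10, 6), (11, 32)] - Cst (emb ph2 (0, -1)) * xm [(2, 6), (7, 25), (10, 2), (11, 32)]"

lemma ffgg: "ff * gg = xm [(2, 25), (7, 2), (10, 6), (11, 32)] * xm [(2, 25), (7, 2), (10, 6), (11, 32)] + of_int (1) * (xm [(2, 25), (7, 2), (10, 6), (11, 32)] * xm [(2, 6), (7, 25), (10, 2), (11, 32)]) + of_int (-1) * (xm [(2, 6), (7, 25), (10, 2), (11, 32)] * xm [(2, 6), (7, 25), (10, 2), (11, 32)])"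
proof -
  have s: "emb ph1 (0, -1) + emb ph2 (0, -1) = of_int (-1)"
  proof -
    have "emb ph1 (0, -1) + emb ph2 (0, -1) = of_int (0) + of_int (-1) * (ph1 + ph2)"
      by (simp add: algebra_simps)
    then show ?thesis unfolding ph_sum by simp
  qed
  have m: "emb ph1 (0, -1) * emb ph2 (0, -1) = of_int (-1)"
    using emb_norm[of "(0, -1)"] by simp
  have "ff * gg = xm [(2, 25), (7, 2), (10, 6), (11, 32)] * xm [(2, 25), (7, 2), (10, 6), (11, 32)] - Cst (emb ph1 (0, -1) + emb ph2 (0, -1)) * (xm [(2, 25), (7, 2), (10, 6), (11, 32)] * xm [(2, 6), (7, 25), (10, 2), (11, 32)])
      + Cst (emb ph1 (0, -1) * emb ph2 (0, -1)) * (xm [(2, 6), (7, 25), (10, 2), (11, 32)] * xm [(2, 6), (7, 25), (10, 2), (11, 32)])"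
    unfolding ff_def gg_def Cst_add Cst_mult by (simp add: algebra_simps del: emb.simps)
  also have "\<dots> = xm [(2, 25), (7, 2), (10, 6), (11, 32)] * xm [(2, 25), (7, 2), (10, 6), (11, 32)] + of_int (1) * (xm [(2, 25), (7, 2), (10, 6), (11, 32)] * xm [(2, 6), (7, 25), (10, 2), (11, 32)]) + of_int (-1) * (xm [(2, 6), (7, 25), (10, 2), (11, 32)] * xm [(2, 6), (7, 25), (10, 2), (11, 32)])"
    unfolding s m Cst_of_int by simp
  finally show ?thesis .
qed

lemma ffgg_II: "ff * gg \<in> II" unfolding ffgg by (rule Q_rel)

lemma ff_PR: "ff \<in> PR" unfolding ff_def by (intro PR_diff PR_mult PR_Cst PR_xm) (simp_all add: supp_simps)
lemma gg_PR: "gg \<in> PR" unfolding gg_def by (intro PR_diff PR_mult PR_Cst PR_xm) (simp_all add: supp_simps)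

lemma suppA: "allsupp [(2, 25), (7, 2), (10, 6), (11, 32)]" by (simp add: supp_simps)
lemma suppC: "allsupp [(2, 6), (7, 25), (10, 2), (11, 32)]" by (simp add: supp_simps)

lemma zA: "zprod (map (\<lambda>(i,j). zval i j) [(2, 25), (7, 2), (10, 6), (11, 32)]) = (-1, 0)"
  by code_simp
lemma zC: "zprod (map (\<lambda>(i,j). zval i j) [(2, 6), (7, 25), (10, 2), (11, 32)]) = (-1, 1)"
  by code_simp
lemma zAC: "(-1, 0) = zmul (0, -1) (-1, 1)" by (simp only: zmul.simps) simp

lemma ev_A: "goodr r \<Longrightarrow> ev (zpt r) (xm [(2, 25), (7, 2), (10, 6), (11, 32)]) = emb r (0, -1) * emb r (-1, 1)"
proof -
  assume g: "goodr r"
  have "ev (zpt r) (xm [(2, 25), (7, 2), (10, 6), (11, 32)]) = emb r (zprod (map (\<lambda>(i,j). zval i j) [(2, 25), (7, 2), (10, 6), (11, 32)]))" by (rule ev_xm[OF suppA g])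
  also have "\<dots> = emb r (-1, 0)" by (simp only: zA)
  also have "\<dots> = emb r (zmul (0, -1) (-1, 1))" by (simp only: zAC)
  also have "\<dots> = emb r (0, -1) * emb r (-1, 1)" by (rule emb_mul[OF g])
  finally show ?thesis .
qed
lemma ev_C: "goodr r \<Longrightarrow> ev (zpt r) (xm [(2, 6), (7, 25), (10, 2), (11, 32)]) = emb r (-1, 1)"
proof -
  assume g: "goodr r"
  have "ev (zpt r) (xm [(2, 6), (7, 25), (10, 2), (11, 32)]) = emb r (zprod (map (\<lambda>(i,j). zval i j) [(2, 6), (7, 25), (10, 2), (11, 32)]))" by (rule ev_xm[OF suppC g])
  also have "\<dots> = emb r (-1, 1)" by (simp only: zC)
  finally show ?thesis .
qed

lemma rho_diff: "emb ph2 (0, -1) - emb ph1 (0, -1) = of_int (-1) * (ph2 - ph1)"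
  by (simp add: algebra_simps)

lemma ff_notin: "ff \<notin> II"
proof
  assume "ff \<in> II"
  then have "ev (zpt ph2) ff = 0" by (rule II_vanish_pt) simp
  moreover have "ev (zpt ph2) ff = (emb ph2 (0, -1) - emb ph1 (0, -1)) * emb ph2 (-1, 1)"
    unfolding ff_def ev_diff ev_mult ev_Cst ev_A[OF goodr_ph(2)] ev_C[OF goodr_ph(2)]
    by (simp add: algebra_simps del: emb.simps)
  moreover have "emb ph2 (0, -1) - emb ph1 (0, -1) \<noteq> 0" unfolding rho_diff using ph_ne by simp
  moreover have "emb ph2 (-1, 1) \<noteq> 0" using emb_nz[of "(-1, 1)"] by simp
  ultimately show False by simp
qed

lemma gg_notin: "gg \<notin> II"
proof
  assume "gg \<in> II"
  then have "ev (zpt ph1) gg = 0" by (rule II_vanish_pt) simp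
  moreover have "ev (zpt ph1) gg = - (emb ph2 (0, -1) - emb ph1 (0, -1)) * emb ph1 (-1, 1)"
    unfolding gg_def ev_diff ev_mult ev_Cst ev_A[OF goodr_ph(1)] ev_C[OF goodr_ph(1)]
    by (simp add: algebra_simps del: emb.simps)
  moreover have "emb ph2 (0, -1) - emb ph1 (0, -1) \<noteq> 0" unfolding rho_diff using ph_ne by simp
  moreover have "emb ph1 (-1, 1) \<noteq> 0" using emb_nz[of "(-1, 1)"] by simp
  ultimately show False by simp
qed

theorem theorem5p3:
  shows "\<not> prime_ideal_in (poly_ring {..<120}) perles_slack_ideal"
proof
  assume "prime_ideal_in (poly_ring {..<120}) perles_slack_ideal"
  then have "ff \<in> II \<or> gg \<in> II" unfolding prime_ideal_in_def using ff_PR gg_PR ffgg_II by blast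
  then show False using ff_notin gg_notin by blast
qed

end
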